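(* Let $\Omega\subset\mathbb{R}^n$, $n\in\mathbb{N}$, be a bounded smooth domain. Let $\alpha\ge0$, $\kappa\ge0$, $T\in(0,\infty]$, and let the nonnegative functions $u,v\in C^0(\overline\Omega\times[0,T))\cap C^{2,1}(\overline\Omega\times(0,T))$ solve \[ u_t=\Delta u-\nabla\cdot\Big(\frac{u}{(1+u)^\alpha}\nabla v\Big)-uw+\kappa-u,\qquad v_t=\Delta v+uw-v\qquad\text{in }\Omega\times(0,T), \] with $\partial_\nu u=\partial_\nu v=\partial_\nu w=0$ on $\partial\Omega\times(0,T)$, for some function $w$. Then \[ \int_\Omega v(\cdot,t)\le e^{-t}\Big(\int_\Omega u(\cdot,0)+\int_\Omega v(\cdot,0)\Big)+\kappa|\Omega|(1-e^{-t})\qquad\text{for all }t\in(0,T). \]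
   Context: $\nu$ denotes the outward unit normal on $\partial\Omega$, $\partial_\nu=\nu\cdot\nabla$, and $|\Omega|$ is the Lebesgue measure of $\Omega$. *)

theory Defs
  imports "HOL-Analysis.Analysis"
begin

definition pdiff :: "'n::finite \<Rightarrow> (real^'n \<Rightarrow> real) \<Rightarrow> real^'n \<Rightarrow> real" where
  "pdiff i f x = frechet_derivative f (at x) (axis i 1)"

fun pdiff_iter :: "'n::finite list \<Rightarrow> (real^'n \<Rightarrow> real) \<Rightarrow> real^'n \<Rightarrow> real" where
  "pdiff_iter [] f = f"
| "pdiff_iter (i # is) f = pdiff i (pdiff_iter is f)"

definition C_infinity :: "(real^'n::finite \<Rightarrow> real) \<Rightarrow> bool" where
  "C_infinity f \<longleftrightarrow> (\<forall>is. (\<forall>x. pdiff_iter is f differentiable (at x)) \<and> continuous_on UNIV (pdiff_iter is f))"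

definition grad :: "(real^'n::finite \<Rightarrow> real) \<Rightarrow> real^'n \<Rightarrow> real^'n" where
  "grad f x = (\<chi> i. pdiff i f x)"

definition divg :: "(real^'n::finite \<Rightarrow> real^'n) \<Rightarrow> real^'n \<Rightarrow> real" where
  "divg F x = (\<Sum>i\<in>UNIV. frechet_derivative F (at x) (axis i 1) $ i)"

definition lap :: "(real^'n::finite \<Rightarrow> real) \<Rightarrow> real^'n \<Rightarrow> real" where
  "lap f x = divg (grad f) x"

definition defining_function :: "(real^'n::finite) set \<Rightarrow> (real^'n \<Rightarrow> real) \<Rightarrow> bool" where
  "defining_function \<Omega> \<phi> \<longleftrightarrow> C_infinity \<phi> \<and> \<Omega> = {x. \<phi> x < 0} \<and>
      (\<forall>x. \<phi> x = 0 \<longrightarrow> grad \<phi> x \<noteq> 0)"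

definition bounded_smooth_domain :: "(real^'n::finite) set \<Rightarrow> bool" where
  "bounded_smooth_domain \<Omega> \<longleftrightarrow> \<Omega> \<noteq> {} \<and> open \<Omega> \<and> connected \<Omega> \<and> bounded \<Omega> \<and>
      (\<exists>\<phi>. defining_function \<Omega> \<phi>)"

(* outward unit normal on the boundary (independent of the chosen defining function) *)
definition outward_normal :: "(real^'n::finite) set \<Rightarrow> real^'n \<Rightarrow> real^'n" where
  "outward_normal \<Omega> x = (let \<phi> = (SOME \<phi>. defining_function \<Omega> \<phi>) in
      grad \<phi> x /\<^sub>R norm (grad \<phi> x))"

definition cyl_closed0 :: "(real^'n::finite) set \<Rightarrow> ereal \<Rightarrow> ((real^'n) \<times> real) set" where
  "cyl_closed0 \<Omega> T = {(x,t). x \<in> closure \<Omega> \<and> 0 \<le> t \<and> ereal t < T}"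

definition cyl_closed :: "(real^'n::finite) set \<Rightarrow> ereal \<Rightarrow> ((real^'n) \<times> real) set" where
  "cyl_closed \<Omega> T = {(x,t). x \<in> closure \<Omega> \<and> 0 < t \<and> ereal t < T}"

definition cyl_open :: "(real^'n::finite) set \<Rightarrow> ereal \<Rightarrow> ((real^'n) \<times> real) set" where
  "cyl_open \<Omega> T = {(x,t). x \<in> \<Omega> \<and> 0 < t \<and> ereal t < T}"

definition C21 :: "(real^'n::finite) set \<Rightarrow> ereal \<Rightarrow> (real^'n \<Rightarrow> real \<Rightarrow> real) \<Rightarrow> bool" where
  "C21 \<Omega> T u \<longleftrightarrow>
     (\<forall>(x,t)\<in>cyl_open \<Omega> T.
        (\<lambda>y. u y t) differentiable (at x) \<and>
        (\<forall>i. pdiff i (\<lambda>y. u y t) differentiable (at x)) \<and>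
        (\<lambda>s. u x s) differentiable (at t)) \<and>
     (\<exists>U. continuous_on (cyl_closed \<Omega> T) U \<and> (\<forall>(x,t)\<in>cyl_open \<Omega> T. U (x,t) = u x t)) \<and>
     (\<forall>i. \<exists>U. continuous_on (cyl_closed \<Omega> T) U \<and>
        (\<forall>(x,t)\<in>cyl_open \<Omega> T. U (x,t) = pdiff i (\<lambda>y. u y t) x)) \<and>
     (\<forall>i j. \<exists>U. continuous_on (cyl_closed \<Omega> T) U \<and>
        (\<forall>(x,t)\<in>cyl_open \<Omega> T. U (x,t) = pdiff j (pdiff i (\<lambda>y. u y t)) x)) \<and>
     (\<exists>U. continuous_on (cyl_closed \<Omega> T) U \<and>
        (\<forall>(x,t)\<in>cyl_open \<Omega> T. U (x,t) = deriv (\<lambda>s. u x s) t))"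

definition normal_deriv :: "(real^'n::finite) set \<Rightarrow> (real^'n \<Rightarrow> real \<Rightarrow> real) \<Rightarrow> real^'n \<Rightarrow> real \<Rightarrow> real" where
  "normal_deriv \<Omega> u x t = Lim (at x within \<Omega>) (\<lambda>y. grad (\<lambda>z. u z t) y) \<bullet> outward_normal \<Omega> x"

end

theory Submission
  imports Defs
begin

definition hc :: "real \<Rightarrow> real" where
  "hc s = (if s \<le> -2 then 1 else if s \<ge> -1 then 0 else 1 - 3*(s+2)^2 + 2*(s+2)^3)"
definition hc' :: "real \<Rightarrow> real" where
  "hc' s = (if s \<le> -2 then 0 else if s \<ge> -1 then 0 else 6*(s+2)^2 - 6*(s+2))"

lemma deriv_paste:
  fixes f fa fb :: "real \<Rightarrow> real"
  assumes "(fa has_real_derivative D) (at x)" "(fb has_real_derivative D) (at x)"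
    "d > 0" "\<And>y. y \<le> x \<Longrightarrow> y > x - d \<Longrightarrow> f y = fa y" "\<And>y. y \<ge> x \<Longrightarrow> y < x + d \<Longrightarrow> f y = fb y"
  shows "(f has_real_derivative D) (at x)"
proof -
  have l: "((\<lambda>y. (fa y - fa x) / (y - x)) \<longlongrightarrow> D) (at_left x)"
    using assms(1) unfolding has_field_derivative_iff by (rule filterlim_mono) (auto simp: at_le)
  have r: "((\<lambda>y. (fb y - fb x) / (y - x)) \<longlongrightarrow> D) (at_right x)"
    using assms(2) unfolding has_field_derivative_iff by (rule filterlim_mono) (auto simp: at_le)
  have l': "((\<lambda>y. (f y - f x) / (y - x)) \<longlongrightarrow> D) (at_left x)"
    apply (rule Lim_transform_eventually[OF l])
    unfolding eventually_at_left_field using assms(3,4) by (auto intro!: exI[of _ "x - d"])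
  have r': "((\<lambda>y. (f y - f x) / (y - x)) \<longlongrightarrow> D) (at_right x)"
    apply (rule Lim_transform_eventually[OF r])
    unfolding eventually_at_right_field using assms(3,5) by (auto intro!: exI[of _ "x + d"])
  show ?thesis unfolding has_field_derivative_iff using l' r' by (simp add: filterlim_at_split)
qed

lemma hc_deriv: "(hc has_real_derivative hc' s) (at s)"
proof -
  let ?p = "\<lambda>s::real. 1 - 3*(s+2)^2 + 2*(s+2)^3"
  have dp: "(?p has_real_derivative (6*(s+2)^2 - 6*(s+2))) (at s)" for s
    by (auto intro!: derivative_eq_intros simp: algebra_simps power2_eq_square)
  consider "s < -2" | "s = -2" | "-2 < s \<and> s < -1" | "s = -1" | "s > -1" by linarith
  then show ?thesis
  proof cases
    case 1
    show ?thesis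
      apply (rule has_field_derivative_transform_within_open[of "\<lambda>_. 1" _ _ "{..<-2}"])
      using 1 by (auto simp: hc_def hc'_def)
  next
    case 2
    show ?thesis apply (rule deriv_paste[where fa="\<lambda>_. 1" and fb= ?p and d="1/2"])
      using dp[of s] 2 by (auto simp: hc_def hc'_def)
  next
    case 3
    show ?thesis
      apply (rule has_field_derivative_transform_within_open[of ?p _ _ "{-2<..<-1}"])
      using dp[of s] 3 by (auto simp: hc_def hc'_def)
  next
    case 4
    show ?thesis apply (rule deriv_paste[where fa= ?p and fb="\<lambda>_. 0" and d="1/2"])
      using dp[of s] 4 by (auto simp: hc_def hc'_def)
  next
    case 5
    show ?thesis
      apply (rule has_field_derivative_transform_within_open[of "\<lambda>_. 0" _ _ "{-1<..}"])
      using 5 by (auto simp: hc_def hc'_def)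
  qed
qed

lemma pdiff_eq:
  assumes "(f has_derivative f') (at x)"
  shows "pdiff i f x = f' (axis i 1)"
  using frechet_derivative_at[OF assms] unfolding pdiff_def by simp

lemma int_box_indep:
  fixes f :: "real^'n \<Rightarrow> real"
  assumes "f integrable_on cbox a b" "\<And>x. x \<notin> cbox a b \<Longrightarrow> f x = 0" "cbox a b \<subseteq> cbox c d"
  shows "integral (cbox c d) f = integral (cbox a b) f"
  using has_integral_on_superset[OF integrable_integral[OF assms(1)] assms(2,3)]
  by (simp add: integral_unique)

lemma int_pdiff_zero:
  fixes g :: "real^'n \<Rightarrow> real"
  assumes diff: "\<And>x. g differentiable (at x)"
    and cont: "continuous_on UNIV (pdiff i g)"
    and supp: "\<And>x. x \<notin> cbox a b \<Longrightarrow> g x = 0"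
  shows "(pdiff i g has_integral 0) UNIV"
proof -
  define e :: "real^'n" where "e = axis i 1"
  define B where "B = cbox (a - 1) b"
  have gcont: "continuous_on UNIV g"
    using diff by (simp add: differentiable_imp_continuous_within continuous_at_imp_continuous_on)
  have pd0: "pdiff i g x = 0" if "x \<notin> cbox a b" for x
  proof -
    have "(g has_derivative (\<lambda>_. 0)) (at x)"
      apply (rule has_derivative_transform_within_open[of "\<lambda>_. 0" _ _ _ "- cbox a b"])
      using that supp by (auto simp: closed_cbox open_Compl)
    then show ?thesis using pdiff_eq by fastforce
  qed
  have e_ge: "0 \<le> e $ j" "e $ j \<le> 1" for j by (auto simp: e_def axis_def)
  have shiftB: "cbox a b \<subseteq> cbox (a - 1 + s *\<^sub>R e) (b + s *\<^sub>R e)" if "0 \<le> s" "s \<le> 1" for s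
  proof -
    have "s * e $ j \<le> 1" "0 \<le> s * e $ j" for j
      using e_ge[of j] that by (auto simp: mult_le_one)
    then show ?thesis
    proof (clarsimp simp: subset_eq mem_box_cart)
      fix x j assume "\<forall>j. a $ j \<le> x $ j \<and> x $ j \<le> b $ j"
      then have "a $ j \<le> x $ j" "x $ j \<le> b $ j" by auto
      with \<open>s * e $ j \<le> 1\<close> \<open>0 \<le> s * e $ j\<close>
      show "a $ j - 1 + s * e $ j \<le> x $ j \<and> x $ j \<le> b $ j + s * e $ j" by linarith
    qed
  qed
  define J where "J = integral (cbox a b) (pdiff i g)"
  have intJ: "pdiff i g integrable_on cbox c d" for c d
    by (rule integrable_continuous) (use cont continuous_on_subset in blast)
  have Jbox: "integral (cbox c d) (pdiff i g) = J" if "cbox a b \<subseteq> cbox c d" for c d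
    unfolding J_def by (rule int_box_indep[OF intJ pd0 that])
  have intg: "g integrable_on cbox c d" for c d
    by (rule integrable_continuous) (use gcont continuous_on_subset in blast)
  have gbox: "integral (cbox c d) g = integral (cbox a b) g" if "cbox a b \<subseteq> cbox c d" for c d
    by (rule int_box_indep[OF intg supp that])
  have dg: "((\<lambda>s. g (x + s *\<^sub>R e)) has_vector_derivative pdiff i g (x + s *\<^sub>R e)) (at s within S)"
    for x s S
  proof -
    obtain D where D: "(g has_derivative D) (at (x + s *\<^sub>R e))" using diff differentiable_def by blast
    have lin: "linear D" using D has_derivative_linear by blast
    have "((\<lambda>s. g (x + s *\<^sub>R e)) has_derivative (\<lambda>h. D (h *\<^sub>R e))) (at s within S)"
      by (rule has_derivative_compose[where f="\<lambda>s. x + s *\<^sub>R e", OF _ has_derivative_at_withinI[OF D]])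
        (auto intro!: derivative_eq_intros)
    moreover have "D (h *\<^sub>R e) = h *\<^sub>R pdiff i g (x + s *\<^sub>R e)" for h
      using pdiff_eq[OF D, of i] lin by (simp add: e_def linear_scale)
    ultimately show ?thesis unfolding has_vector_derivative_def by simp
  qed
  have ftc: "((\<lambda>s. pdiff i g (x + s *\<^sub>R e)) has_integral (g (x + e) - g x)) {0..1}" for x
    using fundamental_theorem_of_calculus[of 0 1 "\<lambda>s. g (x + s *\<^sub>R e)", OF _ dg] by simp
  have contF: "continuous_on (cbox (a - 1, 0) (b, 1)) (\<lambda>(x, s). pdiff i g (x + s *\<^sub>R e))"
  proof -
    have "continuous_on UNIV (\<lambda>p::((real^'n) \<times> real). pdiff i g (fst p + snd p *\<^sub>R e))"
      by (rule continuous_on_compose2[OF cont]) (auto intro!: continuous_intros)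
    then show ?thesis unfolding case_prod_unfold using continuous_on_subset subset_UNIV by blast
  qed
  have swap: "integral B (\<lambda>x. integral (cbox 0 1) (\<lambda>s. pdiff i g (x + s *\<^sub>R e))) =
      integral (cbox 0 1) (\<lambda>s. integral B (\<lambda>x. pdiff i g (x + s *\<^sub>R e)))"
    unfolding B_def by (rule integral_swap_continuous[OF contF])
  have lhs: "integral B (\<lambda>x. integral (cbox 0 1) (\<lambda>s. pdiff i g (x + s *\<^sub>R e))) = 0"
  proof -
    have "integral B (\<lambda>x. integral (cbox 0 1) (\<lambda>s. pdiff i g (x + s *\<^sub>R e))) =
        integral B (\<lambda>x. g (x + e) - g x)"
      using ftc by (intro integral_cong) (simp add: integral_unique)
    also have "\<dots> = integral B (\<lambda>x. g (e + x)) - integral B g"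
    proof -
      have int1: "(\<lambda>x. g (e + x)) integrable_on B"
        using integrable_on_shift_cbox[of g e "a - 1" b] intg by (simp add: o_def B_def)
      have int2: "g integrable_on B" using intg B_def by simp
      show ?thesis using integral_diff[OF int1 int2] by (simp add: add.commute)
    qed
    also have "integral B (\<lambda>x. g (e + x)) = integral (cbox (a - 1 + e) (b + e)) g"
    proof -
      have "((g \<circ> (+) e) has_integral integral (cbox (a - 1 + e) (b + e)) g) (cbox (a - 1) b)"
        using has_integral_shift_cbox_iff[of g e "integral (cbox (a - 1 + e) (b + e)) g" "a - 1" b]
          integrable_integral[OF intg[of "a - 1 + e" "b + e"]] by blast
      from integral_unique[OF this] show ?thesis unfolding B_def o_def .
    qed
    also have "\<dots> = integral (cbox a b) g" using shiftB[of 1] by (intro gbox) simp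
    also have "integral B g = integral (cbox a b) g" unfolding B_def
      using shiftB[of 0] by (intro gbox) simp
    finally show ?thesis by simp
  qed
  have inner: "integral B (\<lambda>x. pdiff i g (x + s *\<^sub>R e)) = J" if "s \<in> cbox 0 1" for s
  proof -
    have "integral B (\<lambda>x. pdiff i g (s *\<^sub>R e + x)) = integral (cbox (a - 1 + s *\<^sub>R e) (b + s *\<^sub>R e)) (pdiff i g)"
    proof -
      have "((pdiff i g \<circ> (+) (s *\<^sub>R e)) has_integral integral (cbox (a - 1 + s *\<^sub>R e) (b + s *\<^sub>R e)) (pdiff i g)) (cbox (a - 1) b)"
        using has_integral_shift_cbox_iff[of "pdiff i g" "s *\<^sub>R e" _ "a - 1" b]
          integrable_integral[OF intJ[of "a - 1 + s *\<^sub>R e" "b + s *\<^sub>R e"]] by blast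
      from integral_unique[OF this] show ?thesis unfolding B_def o_def .
    qed
    also have "\<dots> = J" using that shiftB[of s] by (intro Jbox) auto
    finally show ?thesis by (simp add: add.commute)
  qed
  have "integral (cbox 0 1) (\<lambda>s. integral B (\<lambda>x. pdiff i g (x + s *\<^sub>R e))) = integral (cbox (0::real) 1) (\<lambda>s. J)"
    using inner by (intro integral_cong) auto
  then have "J = 0" using swap lhs by simp
  then show ?thesis
    using has_integral_on_superset[OF integrable_integral[OF intJ[of a b]] pd0 subset_UNIV] J_def by simp
qed

lemma hc'_alt: "hc' s = (\<lambda>c. 6*(c+2)^2 - 6*(c+2)) (max (-2) (min (-1) s))"
  by (auto simp: hc'_def max_def min_def)

lemma hc'_cont: "continuous_on UNIV hc'"
  by (subst hc'_alt[abs_def]) (auto intro!: continuous_intros)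

lemma hc_cont: "continuous_on UNIV hc"
  using hc_deriv by (meson DERIV_isCont continuous_at_imp_continuous_on)

lemma hc'_le: "hc' s \<le> 0"
proof -
  have "6*(s+2)^2 - 6*(s+2) \<le> 0" if "-2 < s" "s < -1"
  proof -
    have "(s+2)^2 \<le> (s+2)" using that by (simp add: power2_eq_square mult_le_cancel_right1 less_imp_le)
    then show ?thesis by simp
  qed
  then show ?thesis by (auto simp: hc'_def)
qed

lemma hc_bounds: "0 \<le> hc s" "hc s \<le> 1"
proof -
  have "0 \<le> 1 - 3*(s+2)^2 + 2*(s+2)^3 \<and> 1 - 3*(s+2)^2 + 2*(s+2)^3 \<le> 1" if "-2 < s" "s < -1"
  proof -
    define t where "t = s + 2"
    have t: "0 < t" "t < 1" using that t_def by auto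
    have "1 - 3*t^2 + 2*t^3 = (1 - t)^2 * (1 + 2*t)" by (simp add: algebra_simps power2_eq_square power3_eq_cube)
    moreover have "3*t^2 - 2*t^3 = t^2 * (3 - 2*t)" by (simp add: algebra_simps power2_eq_square power3_eq_cube)
    ultimately show ?thesis using t unfolding t_def[symmetric]
      by (smt (verit) mult_nonneg_nonneg zero_le_power2)
  qed
  then show "0 \<le> hc s" "hc s \<le> 1" by (auto simp: hc_def)
qed

lemma hc_one: "s \<le> -2 \<Longrightarrow> hc s = 1" and hc_zero: "s \<ge> -1 \<Longrightarrow> hc s = 0"
  and hc'_zero: "s \<le> -2 \<or> s \<ge> -1 \<Longrightarrow> hc' s = 0"
  by (auto simp: hc_def hc'_def)

lemma comp_deriv:
  fixes F :: "real^'n \<Rightarrow> real^'n"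
  assumes "(F has_derivative F') (at x)"
  shows "((\<lambda>y. F y $ i) has_derivative (\<lambda>v. F' v $ i)) (at x)"
  using bounded_linear.has_derivative[OF bounded_linear_vec_nth assms] .

lemma divg_eq:
  fixes F :: "real^'n \<Rightarrow> real^'n"
  assumes "F differentiable (at x)"
  shows "divg F x = (\<Sum>i\<in>UNIV. pdiff i (\<lambda>y. F y $ i) x)"
proof -
  obtain F' where F': "(F has_derivative F') (at x)" using assms differentiable_def by blast
  show ?thesis unfolding divg_def
    using frechet_derivative_at[OF F'] pdiff_eq[OF comp_deriv[OF F']] by simp
qed

lemma grad_nth: "grad f x $ i = pdiff i f x" by (simp add: grad_def)

lemma identity:
  fixes \<phi> :: "real^'n \<Rightarrow> real" and F :: "real^'n \<Rightarrow> real^'n"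
  assumes phd: "\<And>x. \<phi> differentiable (at x)"
    and gcont: "continuous_on UNIV (grad \<phi>)"
    and Om: "\<Omega> = {x. \<phi> x < 0}" and bdd: "bounded \<Omega>"
    and eps: "\<epsilon> > 0"
    and Fd: "\<And>x. x \<in> \<Omega> \<Longrightarrow> F differentiable (at x)"
    and Fc: "\<And>i. continuous_on \<Omega> (pdiff i (\<lambda>y. F y $ i))"
  shows "((\<lambda>x. hc' (\<phi> x / \<epsilon>) / \<epsilon> * (grad \<phi> x \<bullet> F x) + hc (\<phi> x / \<epsilon>) * divg F x) has_integral 0) \<Omega>"
proof -
  have phc: "continuous_on UNIV \<phi>"
    using phd by (simp add: differentiable_imp_continuous_within continuous_at_imp_continuous_on)
  have opO: "open \<Omega>" unfolding Om using phc by (simp add: open_Collect_less)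
  define V where "V = {x. \<phi> x > - \<epsilon>}"
  have opV: "open V" unfolding V_def using phc by (simp add: open_Collect_less)
  have OV: "\<Omega> \<union> V = UNIV" unfolding Om V_def using eps by auto
  have hV: "hc (\<phi> x / \<epsilon>) = 0" "hc' (\<phi> x / \<epsilon>) = 0" if "x \<in> V" for x
    using that eps by (auto simp: V_def intro!: hc_zero hc'_zero simp: field_simps)
  have Fcont: "continuous_on \<Omega> F"
    using Fd by (meson continuous_at_imp_continuous_on differentiable_imp_continuous_within)
  define g where "g i x = (if x \<in> \<Omega> then hc (\<phi> x / \<epsilon>) * F x $ i else 0)" for i x
  define Q where "Q i x = hc' (\<phi> x / \<epsilon>) / \<epsilon> * pdiff i \<phi> x * F x $ i + hc (\<phi> x / \<epsilon>) * pdiff i (\<lambda>y. F y $ i) x" for i x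
  have gV: "g i x = 0" if "x \<in> V" for i x using hV[OF that] by (simp add: g_def)
  have dO: "(g i has_derivative (\<lambda>v. hc' (\<phi> x / \<epsilon>) / \<epsilon> * frechet_derivative \<phi> (at x) v * F x $ i
              + hc (\<phi> x / \<epsilon>) * frechet_derivative (\<lambda>y. F y $ i) (at x) v)) (at x)"
    if x: "x \<in> \<Omega>" for i x
  proof -
    have D1: "(\<phi> has_derivative frechet_derivative \<phi> (at x)) (at x)"
      using phd frechet_derivative_works by blast
    have D2: "((\<lambda>y. F y $ i) has_derivative frechet_derivative (\<lambda>y. F y $ i) (at x)) (at x)"
      using Fd[OF x] comp_deriv frechet_derivative_works
      by (metis differentiable_def)
    have D3: "((\<lambda>y. hc (\<phi> y / \<epsilon>)) has_derivative (\<lambda>v. hc' (\<phi> x / \<epsilon>) / \<epsilon> * frechet_derivative \<phi> (at x) v)) (at x)"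
    proof -
      have "((\<lambda>y. \<phi> y / \<epsilon>) has_derivative (\<lambda>v. frechet_derivative \<phi> (at x) v / \<epsilon>)) (at x)"
        using D1 eps by (auto intro!: derivative_eq_intros)
      from has_derivative_compose[OF this hc_deriv[of "\<phi> x / \<epsilon>", unfolded has_field_derivative_def]]
      show ?thesis by (simp add: algebra_simps)
    qed
    have "((\<lambda>y. hc (\<phi> y / \<epsilon>) * F y $ i) has_derivative (\<lambda>v. hc' (\<phi> x / \<epsilon>) / \<epsilon> * frechet_derivative \<phi> (at x) v * F x $ i
              + hc (\<phi> x / \<epsilon>) * frechet_derivative (\<lambda>y. F y $ i) (at x) v)) (at x)"
      using has_derivative_mult[OF D3 D2] by (simp add: algebra_simps)
    then show ?thesis
      by (rule has_derivative_transform_within_open[OF _ opO x]) (simp add: g_def)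
  qed
  have dV: "(g i has_derivative (\<lambda>v. 0)) (at x)" if "x \<in> V" for i x
    by (rule has_derivative_transform_within_open[of "\<lambda>_. 0" _ _ _ V]) (use that opV gV in auto)
  have gdiff: "g i differentiable (at x)" for i x
    using dO dV OV differentiable_def by blast
  have pdO: "pdiff i (g i) x = Q i x" if "x \<in> \<Omega>" for i x
    using pdiff_eq[OF dO[OF that]] unfolding Q_def pdiff_def by simp
  have pdV: "pdiff i (g i) x = 0" if "x \<in> V" for i x
    using pdiff_eq[OF dV[OF that]] by simp
  have Qc: "continuous_on \<Omega> (Q i)" for i
  proof -
    have c1: "continuous_on \<Omega> (\<lambda>x. hc' (\<phi> x / \<epsilon>))"
      by (rule continuous_on_compose2[OF hc'_cont]) (use eps in \<open>auto intro!: continuous_intros phc[THEN continuous_on_subset]\<close>)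
    have c2: "continuous_on \<Omega> (\<lambda>x. hc (\<phi> x / \<epsilon>))"
      by (rule continuous_on_compose2[OF hc_cont]) (use eps in \<open>auto intro!: continuous_intros phc[THEN continuous_on_subset]\<close>)
    have c3: "continuous_on \<Omega> (pdiff i \<phi>)"
    proof -
      have "continuous_on UNIV (\<lambda>x. grad \<phi> x $ i)" using gcont by (auto intro!: continuous_intros)
      then show ?thesis by (simp add: grad_nth) (meson continuous_on_subset subset_UNIV)
    qed
    have c4: "continuous_on \<Omega> (\<lambda>x. F x $ i)" using Fcont by (auto intro!: continuous_intros)
    show ?thesis unfolding Q_def
      by (intro continuous_intros c1 c2 c3 c4 Fc) (use eps Fcont in auto)
  qed
  have pdc: "continuous_on UNIV (pdiff i (g i))" for i
  proof -
    have "continuous_on (\<Omega> \<union> V) (pdiff i (g i))"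
    proof (rule continuous_on_open_Un[OF opO opV])
      show "continuous_on \<Omega> (pdiff i (g i))" using Qc continuous_on_eq pdO by metis
      show "continuous_on V (pdiff i (g i))" using pdV continuous_on_eq continuous_on_const by metis
    qed
    then show ?thesis using OV by simp
  qed
  obtain a b where ab: "\<Omega> \<subseteq> cbox a b" using bdd bounded_subset_cbox_symmetric by metis
  have supp: "g i x = 0" if "x \<notin> cbox a b" for i x using that ab by (auto simp: g_def)
  have int0: "(pdiff i (g i) has_integral 0) UNIV" for i
    by (rule int_pdiff_zero[OF gdiff pdc supp])
  have intO: "(Q i has_integral 0) \<Omega>" for i
  proof -
    have "((\<lambda>x. if x \<in> \<Omega> then Q i x else 0) has_integral 0) UNIV"
      using int0[of i] by (rule has_integral_cong[THEN iffD1, rotated])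
        (use pdO pdV OV in auto)
    then show ?thesis by (simp add: has_integral_restrict_UNIV)
  qed
  have "((\<lambda>x. \<Sum>i\<in>UNIV. Q i x) has_integral (\<Sum>i\<in>(UNIV::'n set). 0)) \<Omega>"
    by (rule has_integral_sum) (auto intro: intO)
  then have sumI: "((\<lambda>x. \<Sum>i\<in>UNIV. Q i x) has_integral 0) \<Omega>" by simp
  show ?thesis
  proof (rule has_integral_cong[THEN iffD1, OF _ sumI])
    fix x assume x: "x \<in> \<Omega>"
    show "(\<Sum>i\<in>UNIV. Q i x) = hc' (\<phi> x / \<epsilon>) / \<epsilon> * (grad \<phi> x \<bullet> F x) + hc (\<phi> x / \<epsilon>) * divg F x"
      unfolding Q_def divg_eq[OF Fd[OF x]] inner_vec_def grad_nth
      by (simp add: sum.distrib sum_distrib_left algebra_simps)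
  qed
qed

lemma vec_lambda_diff:
  fixes f :: "'n::finite \<Rightarrow> real^'m \<Rightarrow> real"
  assumes "\<And>i. f i differentiable (at x)"
  shows "(\<lambda>y. \<chi> i. f i y) differentiable (at x)"
proof -
  have eq: "(\<lambda>y. \<chi> i. f i y) = (\<lambda>y. \<Sum>i\<in>UNIV. f i y *\<^sub>R axis i (1::real))"
    by (auto simp: vec_eq_iff axis_def if_distrib cong: if_cong)
  show ?thesis unfolding eq
    by (rule differentiable_sum) (auto intro!: differentiable_scaleR assms)
qed

lemma abs_int_compact:
  fixes f :: "real^'n \<Rightarrow> real"
  assumes "compact K" "continuous_on K f"
  shows "f absolutely_integrable_on K"
proof -
  have i: "integrable lborel (\<lambda>x. indicator K x *\<^sub>R f x)" by (rule borel_integrable_compact[OF assms])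
  then have "integrable lebesgue (\<lambda>x. indicator K x *\<^sub>R f x)"
    using integrable_completion borel_measurable_integrable by blast
  then show ?thesis by (simp add: set_integrable_def)
qed

lemma int_closure:
  fixes f :: "real^'n \<Rightarrow> real"
  assumes "bounded S" "open S" "continuous_on (closure S) f"
  shows "f absolutely_integrable_on S" "f integrable_on S"
proof -
  have "f absolutely_integrable_on closure S"
    using abs_int_compact[OF _ assms(3)] assms(1) compact_closure by blast
  moreover have "S \<in> sets lebesgue" using lmeasurable_open[OF assms(1,2)] by (simp add: fmeasurableD)
  ultimately show "f absolutely_integrable_on S"
    using set_integrable_subset closure_subset by blast
  then show "f integrable_on S" using absolutely_integrable_on_def by blast
qed

lemma compact_neg_bound:
  fixes f :: "'a::metric_space \<Rightarrow> real"
  assumes "compact K" "continuous_on K f" "\<And>x. x \<in> K \<Longrightarrow> f x < 0"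
  obtains \<delta> where "\<delta> > 0" "\<And>x. x \<in> K \<Longrightarrow> f x \<le> - \<delta>"
proof (cases "K = {}")
  case True then show ?thesis using that[of 1] by auto
next
  case False
  obtain y where y: "y \<in> K" "\<And>x. x \<in> K \<Longrightarrow> f x \<le> f y"
    using continuous_attains_sup[OF assms(1) False assms(2)] by blast
  show ?thesis using that[of "- f y"] y assms(3)[OF y(1)] by force
qed

lemma div_zero:
  fixes \<phi> :: "real^'n \<Rightarrow> real" and F G :: "real^'n \<Rightarrow> real^'n" and D :: "real^'n \<Rightarrow> real"
  assumes phd: "\<And>x. \<phi> differentiable (at x)"
    and gcont: "continuous_on UNIV (grad \<phi>)"
    and gd: "\<And>x i. pdiff i \<phi> differentiable (at x)"
    and g2c: "\<And>i. continuous_on UNIV (pdiff i (pdiff i \<phi>))"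
    and gnz: "\<And>x. \<phi> x = 0 \<Longrightarrow> grad \<phi> x \<noteq> 0"
    and Om: "\<Omega> = {x. \<phi> x < 0}" and bdd: "bounded \<Omega>"
    and Fd: "\<And>x. x \<in> \<Omega> \<Longrightarrow> F differentiable (at x)"
    and Fc: "\<And>i. continuous_on \<Omega> (pdiff i (\<lambda>y. F y $ i))"
    and Dc: "continuous_on (closure \<Omega>) D" and DF: "\<And>x. x \<in> \<Omega> \<Longrightarrow> D x = divg F x"
    and Gc: "continuous_on (closure \<Omega>) G" and GF: "\<And>x. x \<in> \<Omega> \<Longrightarrow> G x = F x"
    and Gb: "\<And>x. x \<in> frontier \<Omega> \<Longrightarrow> G x \<bullet> grad \<phi> x = 0"
  shows "(divg F has_integral 0) \<Omega>"
proof -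
  have phc: "continuous_on UNIV \<phi>"
    using phd by (simp add: differentiable_imp_continuous_within continuous_at_imp_continuous_on)
  have opO: "open \<Omega>" unfolding Om using phc by (simp add: open_Collect_less)
  have cpt: "compact (closure \<Omega>)" using bdd compact_closure by blast
  have phle: "\<phi> x \<le> 0" if "x \<in> closure \<Omega>" for x
  proof -
    have "closed {x. \<phi> x \<le> 0}" using phc by (simp add: closed_Collect_le)
    moreover have "\<Omega> \<subseteq> {x. \<phi> x \<le> 0}" using Om by auto
    ultimately show ?thesis using that closure_minimal by blast
  qed
  have fr: "x \<in> frontier \<Omega>" if "x \<in> closure \<Omega>" "\<phi> x = 0" for x
    using that Om opO by (simp add: frontier_def interior_open)
  have frphi: "\<phi> x = 0" if "x \<in> frontier \<Omega>" for x
    using that phle Om opO by (force simp: frontier_def interior_open)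
  have gcS: "continuous_on S (grad \<phi>)" for S using gcont continuous_on_subset by blast
  have gc2: "continuous_on UNIV (\<lambda>x. grad \<phi> x \<bullet> grad \<phi> x)"
    using gcont by (auto intro!: continuous_intros)
  obtain c1 where c1: "c1 > 0" "\<And>x. x \<in> frontier \<Omega> \<Longrightarrow> - (grad \<phi> x \<bullet> grad \<phi> x) \<le> - c1"
  proof (rule compact_neg_bound[of "frontier \<Omega>" "\<lambda>x. - (grad \<phi> x \<bullet> grad \<phi> x)"])
    show "compact (frontier \<Omega>)" using bdd by (simp add: compact_frontier_bounded)
    show "continuous_on (frontier \<Omega>) (\<lambda>x. - (grad \<phi> x \<bullet> grad \<phi> x))"
      using gcS by (auto intro!: continuous_intros)
    show "- (grad \<phi> x \<bullet> grad \<phi> x) < 0" if "x \<in> frontier \<Omega>" for x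
      using gnz[OF frphi[OF that]] by simp
  qed auto
  define c where "c = c1 / 2"
  have c: "c > 0" using c1 c_def by simp
  obtain \<delta>1 where d1: "\<delta>1 > 0" "\<And>x. x \<in> closure \<Omega> \<inter> {x. grad \<phi> x \<bullet> grad \<phi> x \<le> c} \<Longrightarrow> \<phi> x \<le> - \<delta>1"
  proof (rule compact_neg_bound[of "closure \<Omega> \<inter> {x. grad \<phi> x \<bullet> grad \<phi> x \<le> c}" \<phi>])
    show "compact (closure \<Omega> \<inter> {x. grad \<phi> x \<bullet> grad \<phi> x \<le> c})"
      using cpt gc2 by (intro compact_Int_closed) (auto simp: closed_Collect_le)
    show "continuous_on (closure \<Omega> \<inter> {x. grad \<phi> x \<bullet> grad \<phi> x \<le> c}) \<phi>"
      using phc continuous_on_subset by blast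
    show "\<phi> x < 0" if "x \<in> closure \<Omega> \<inter> {x. grad \<phi> x \<bullet> grad \<phi> x \<le> c}" for x
    proof -
      have "\<phi> x \<noteq> 0"
      proof
        assume "\<phi> x = 0"
        then have "x \<in> frontier \<Omega>" using fr that by auto
        then show False using c1(2)[of x] that c_def c1(1) by auto
      qed
      then show ?thesis using phle that by force
    qed
  qed auto
  have gradlow: "grad \<phi> x \<bullet> grad \<phi> x > c" if "x \<in> closure \<Omega>" "\<phi> x > - \<delta>1" for x
    using d1(2)[of x] that by force
  have psic: "continuous_on (closure \<Omega>) (\<lambda>x. G x \<bullet> grad \<phi> x)"
    using Gc gcS by (auto intro!: continuous_intros)
  have psismall: "\<exists>\<delta>>0. \<forall>x\<in>closure \<Omega>. \<phi> x > - \<delta> \<longrightarrow> \<bar>G x \<bullet> grad \<phi> x\<bar> < \<theta>" if th: "\<theta> > 0" for \<theta>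
  proof -
    obtain \<delta> where d: "\<delta> > 0" "\<And>x. x \<in> closure \<Omega> \<inter> {x. \<bar>G x \<bullet> grad \<phi> x\<bar> \<ge> \<theta>} \<Longrightarrow> \<phi> x \<le> - \<delta>"
    proof (rule compact_neg_bound[of "closure \<Omega> \<inter> {x. \<bar>G x \<bullet> grad \<phi> x\<bar> \<ge> \<theta>}" \<phi>])
      have "closed (closure \<Omega> \<inter> {x. \<bar>G x \<bullet> grad \<phi> x\<bar> \<ge> \<theta>})"
      proof -
        have "continuous_on (closure \<Omega>) (\<lambda>x. \<bar>G x \<bullet> grad \<phi> x\<bar>)" using psic by (rule continuous_on_rabs)
        from continuous_closed_preimage[OF this closed_closure closed_atLeast[of \<theta>]]
        show ?thesis by (simp add: vimage_def Int_def)
      qed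
      then show "compact (closure \<Omega> \<inter> {x. \<bar>G x \<bullet> grad \<phi> x\<bar> \<ge> \<theta>})"
        using cpt by (meson compact_Int_closed closed_closure inf.cobounded1 compact_eq_bounded_closed bounded_subset)
      show "continuous_on (closure \<Omega> \<inter> {x. \<bar>G x \<bullet> grad \<phi> x\<bar> \<ge> \<theta>}) \<phi>"
        using phc continuous_on_subset by blast
      show "\<phi> x < 0" if "x \<in> closure \<Omega> \<inter> {x. \<bar>G x \<bullet> grad \<phi> x\<bar> \<ge> \<theta>}" for x
      proof -
        have "\<phi> x \<noteq> 0"
        proof
          assume "\<phi> x = 0"
          then have "x \<in> frontier \<Omega>" using fr that by auto
          then show False using Gb[of x] that th by auto
        qed
        then show ?thesis using phle that by force
      qed
    qed auto
    then show ?thesis by (intro exI[of _ \<delta>]) force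
  qed
  define L where "L x = divg (grad \<phi>) x" for x
  have gradd: "grad \<phi> differentiable (at x)" for x
    unfolding grad_def[abs_def] by (rule vec_lambda_diff[OF gd])
  have Lc: "continuous_on UNIV L"
  proof -
    have "L = (\<lambda>x. \<Sum>i\<in>UNIV. pdiff i (pdiff i \<phi>) x)"
      unfolding L_def by (rule ext) (simp add: divg_eq[OF gradd] grad_nth)
    then show ?thesis using g2c by (auto intro!: continuous_intros)
  qed
  have Id0: "((\<lambda>x. hc' (\<phi> x / \<epsilon>) / \<epsilon> * (grad \<phi> x \<bullet> grad \<phi> x) + hc (\<phi> x / \<epsilon>) * L x) has_integral 0) \<Omega>"
    if "\<epsilon> > 0" for \<epsilon>
    unfolding L_def
  proof (rule identity[OF phd gcont Om bdd that])
    show "grad \<phi> differentiable (at x)" for x by (rule gradd)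
    show "continuous_on \<Omega> (pdiff i (\<lambda>y. grad \<phi> y $ i))" for i
      by (simp add: grad_nth) (meson continuous_on_subset g2c subset_UNIV)
  qed
  have intclos: "f integrable_on \<Omega>" if "continuous_on (closure \<Omega>) f" for f :: "real^'n \<Rightarrow> real"
    using int_closure[OF bdd opO that] by blast
  have hcphic: "continuous_on UNIV (\<lambda>x. hc (\<phi> x / \<epsilon>))" for \<epsilon>
  proof -
    have "continuous_on UNIV (\<lambda>x. \<phi> x * inverse \<epsilon>)" using phc by (intro continuous_intros)
    then show ?thesis
      by (intro continuous_on_compose2[OF hc_cont]) (auto simp: divide_inverse)
  qed
  have hcphiS: "continuous_on S (\<lambda>x. hc (\<phi> x / \<epsilon>))" for \<epsilon> S
    using hcphic continuous_on_subset by blast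
  have LS: "continuous_on S L" for S using Lc continuous_on_subset by blast
  define C where "C = integral \<Omega> (\<lambda>x. \<bar>L x\<bar>)"
  have Abound: "integral \<Omega> (\<lambda>x. - hc' (\<phi> x / \<epsilon>) / \<epsilon> * (grad \<phi> x \<bullet> grad \<phi> x)) \<le> C"
    "(\<lambda>x. - hc' (\<phi> x / \<epsilon>) / \<epsilon> * (grad \<phi> x \<bullet> grad \<phi> x)) integrable_on \<Omega>"
    if e: "\<epsilon> > 0" for \<epsilon>
  proof -
    have i1: "(\<lambda>x. hc (\<phi> x / \<epsilon>) * L x) integrable_on \<Omega>"
      by (rule intclos) (auto intro!: continuous_intros hcphiS LS)
    have i2: "(\<lambda>x. \<bar>L x\<bar>) integrable_on \<Omega>"
      by (rule intclos) (auto intro!: continuous_intros LS)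
    have eq: "(\<lambda>x. - hc' (\<phi> x / \<epsilon>) / \<epsilon> * (grad \<phi> x \<bullet> grad \<phi> x)) =
        (\<lambda>x. hc (\<phi> x / \<epsilon>) * L x - (hc' (\<phi> x / \<epsilon>) / \<epsilon> * (grad \<phi> x \<bullet> grad \<phi> x) + hc (\<phi> x / \<epsilon>) * L x))"
      by (auto simp: fun_eq_iff)
    have hi: "((\<lambda>x. - hc' (\<phi> x / \<epsilon>) / \<epsilon> * (grad \<phi> x \<bullet> grad \<phi> x)) has_integral integral \<Omega> (\<lambda>x. hc (\<phi> x / \<epsilon>) * L x) - 0) \<Omega>"
      unfolding eq by (rule has_integral_diff[OF integrable_integral[OF i1] Id0[OF e]])
    then show "(\<lambda>x. - hc' (\<phi> x / \<epsilon>) / \<epsilon> * (grad \<phi> x \<bullet> grad \<phi> x)) integrable_on \<Omega>" by blast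
    have "integral \<Omega> (\<lambda>x. hc (\<phi> x / \<epsilon>) * L x) \<le> C"
      unfolding C_def
    proof (rule integral_le[OF i1 i2])
      fix x show "hc (\<phi> x / \<epsilon>) * L x \<le> \<bar>L x\<bar>"
      proof -
        have "hc (\<phi> x / \<epsilon>) * L x \<le> hc (\<phi> x / \<epsilon>) * \<bar>L x\<bar>"
          using hc_bounds(1)[of "\<phi> x / \<epsilon>"] by (simp add: mult_left_mono)
        also have "\<dots> \<le> \<bar>L x\<bar>"
          using hc_bounds[of "\<phi> x / \<epsilon>"] by (simp add: mult_left_le_one_le)
        finally show ?thesis .
      qed
    qed
    then show "integral \<Omega> (\<lambda>x. - hc' (\<phi> x / \<epsilon>) / \<epsilon> * (grad \<phi> x \<bullet> grad \<phi> x)) \<le> C"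
      using integral_unique[OF hi] by simp
  qed

  define e where "e k = 1 / (real k + 1)" for k :: nat
  have epos: "e k > 0" for k by (simp add: e_def)
  have esmall: "\<exists>N. \<forall>k\<ge>N. e k \<le> \<delta>" if "\<delta> > 0" for \<delta>
  proof -
    obtain N :: nat where N: "1 / \<delta> < real N" using reals_Archimedean2 by blast
    have "e k \<le> \<delta>" if "k \<ge> N" for k
    proof -
      have "1 / \<delta> < real k + 1" using N that by linarith
      then have "1 < (real k + 1) * \<delta>" using \<open>\<delta> > 0\<close> by (simp only: divide_less_eq)
      moreover have "real k + 1 > 0" by simp
      ultimately show ?thesis unfolding e_def by (simp only: divide_le_eq) (simp add: mult.commute)
    qed
    then show ?thesis by blast
  qed
  define fk where "fk k x = hc (\<phi> x / e k) * divg F x" for k x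
  have Di: "D integrable_on \<Omega>" by (rule intclos[OF Dc])
  have Dai: "(\<lambda>x. \<bar>D x\<bar>) integrable_on \<Omega>"
    by (rule intclos) (auto intro!: continuous_intros Dc)
  have fki: "fk k integrable_on \<Omega>" for k
  proof -
    have "(\<lambda>x. hc (\<phi> x / e k) * D x) integrable_on \<Omega>"
      by (rule intclos) (auto intro!: continuous_intros hcphiS Dc)
    then obtain I where I: "((\<lambda>x. hc (\<phi> x / e k) * D x) has_integral I) \<Omega>"
      unfolding integrable_on_def by blast
    have "(fk k has_integral I) \<Omega>"
      using has_integral_cong[of \<Omega> "\<lambda>x. hc (\<phi> x / e k) * D x" "fk k" I] I DF by (simp add: fk_def)
    then show ?thesis by blast
  qed
  have fkle: "norm (fk k x) \<le> \<bar>D x\<bar>" if "x \<in> \<Omega>" for k x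
  proof -
    have "norm (fk k x) = hc (\<phi> x / e k) * \<bar>D x\<bar>"
      using hc_bounds(1)[of "\<phi> x / e k"] DF[OF that] unfolding fk_def by (simp add: abs_mult)
    also have "\<dots> \<le> \<bar>D x\<bar>" using hc_bounds[of "\<phi> x / e k"] by (simp add: mult_left_le_one_le)
    finally show ?thesis .
  qed
  have fkconv: "(\<lambda>k. fk k x) \<longlonglongrightarrow> divg F x" if x: "x \<in> \<Omega>" for x
  proof -
    have neg: "- \<phi> x / 2 > 0" using x Om by auto
    obtain N where N: "\<forall>k\<ge>N. e k \<le> - \<phi> x / 2" using esmall[OF neg] by blast
    have "fk k x = divg F x" if "k \<ge> N" for k
    proof -
      have ek: "e k \<le> - \<phi> x / 2" using N that by blast
      have "\<phi> x / e k = \<phi> x * (real k + 1)" by (simp add: e_def)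
      moreover have "1 \<le> (- \<phi> x / 2) * (real k + 1)"
        using ek unfolding e_def by (simp only: divide_le_eq)
      moreover have "(- \<phi> x / 2) * (real k + 1) = - (\<phi> x * (real k + 1)) / 2" by simp
      ultimately have "\<phi> x / e k \<le> -2" by linarith
      then show ?thesis by (simp add: fk_def hc_one)
    qed
    then show ?thesis by (intro tendsto_eventually) (auto simp: eventually_sequentially)
  qed
  have dc: "divg F integrable_on \<Omega>" "(\<lambda>k. integral \<Omega> (fk k)) \<longlonglongrightarrow> integral \<Omega> (divg F)"
    using dominated_convergence[OF fki Dai fkle fkconv] by auto
  define I where "I = integral \<Omega> (divg F)"
  have Rint: "integral \<Omega> (fk k) = - integral \<Omega> (\<lambda>x. hc' (\<phi> x / e k) / e k * (grad \<phi> x \<bullet> F x))"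
    "(\<lambda>x. hc' (\<phi> x / e k) / e k * (grad \<phi> x \<bullet> F x)) integrable_on \<Omega>" for k
  proof -
    have Id: "((\<lambda>x. hc' (\<phi> x / e k) / e k * (grad \<phi> x \<bullet> F x) + hc (\<phi> x / e k) * divg F x) has_integral 0) \<Omega>"
      by (rule identity[OF phd gcont Om bdd epos Fd Fc])
    have eq: "(\<lambda>x. hc' (\<phi> x / e k) / e k * (grad \<phi> x \<bullet> F x)) =
        (\<lambda>x. (hc' (\<phi> x / e k) / e k * (grad \<phi> x \<bullet> F x) + hc (\<phi> x / e k) * divg F x) - fk k x)"
      by (auto simp: fun_eq_iff fk_def)
    have hi: "((\<lambda>x. hc' (\<phi> x / e k) / e k * (grad \<phi> x \<bullet> F x)) has_integral 0 - integral \<Omega> (fk k)) \<Omega>"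
      unfolding eq by (rule has_integral_diff[OF Id integrable_integral[OF fki]])
    then show "(\<lambda>x. hc' (\<phi> x / e k) / e k * (grad \<phi> x \<bullet> F x)) integrable_on \<Omega>" by blast
    show "integral \<Omega> (fk k) = - integral \<Omega> (\<lambda>x. hc' (\<phi> x / e k) / e k * (grad \<phi> x \<bullet> F x))"
      using integral_unique[OF hi] by simp
  qed
  have Cnn: "C \<ge> 0" unfolding C_def
    by (rule integral_nonneg) (auto intro!: intclos continuous_intros LS)
  have Ibound: "\<bar>I\<bar> \<le> \<theta> * C / c" if th: "\<theta> > 0" for \<theta>
  proof -
    obtain \<delta>2 where d2: "\<delta>2 > 0" "\<And>x. x \<in> closure \<Omega> \<Longrightarrow> \<phi> x > - \<delta>2 \<Longrightarrow> \<bar>G x \<bullet> grad \<phi> x\<bar> < \<theta>"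
      using psismall[OF th] by blast
    define \<delta> where "\<delta> = min \<delta>1 \<delta>2 / 2"
    have dpos: "\<delta> > 0" using d1 d2 \<delta>_def by simp
    obtain N where N: "\<forall>k\<ge>N. e k \<le> \<delta>" using esmall[OF dpos] by blast
    have "\<bar>integral \<Omega> (fk k)\<bar> \<le> \<theta> * C / c" if k: "k \<ge> N" for k
    proof -
      let ?R = "\<lambda>x. hc' (\<phi> x / e k) / e k * (grad \<phi> x \<bullet> F x)"
      let ?A = "\<lambda>x. - hc' (\<phi> x / e k) / e k * (grad \<phi> x \<bullet> grad \<phi> x)"
      have pt: "norm (?R x) \<le> \<theta> / c * ?A x" if x: "x \<in> \<Omega>" for x
      proof (cases "hc' (\<phi> x / e k) = 0")
        case True then show ?thesis by simp
      next
        case False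
        have "\<phi> x / e k > -2"
        proof (rule ccontr)
          assume "\<not> \<phi> x / e k > -2"
          then have "\<phi> x / e k \<le> -2" by simp
          then show False using False hc'_zero by blast
        qed
        then have "\<phi> x > - 2 * e k" using epos[of k] by (simp add: field_simps)
        moreover have "e k \<le> \<delta>" using N k by blast
        ultimately have ph: "\<phi> x > - \<delta>1" "\<phi> x > - \<delta>2" using \<delta>_def by auto
        have xc: "x \<in> closure \<Omega>" using x closure_subset by blast
        have g1: "grad \<phi> x \<bullet> grad \<phi> x > c" using gradlow[OF xc ph(1)] .
        have g2: "\<bar>grad \<phi> x \<bullet> F x\<bar> < \<theta>" using d2(2)[OF xc ph(2)] GF[OF x] by (simp add: inner_commute)
        define a where "a = - hc' (\<phi> x / e k) / e k"
        have a: "a \<ge> 0" unfolding a_def using hc'_le[of "\<phi> x / e k"] epos[of k] by (simp add: divide_nonpos_pos)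
        have "norm (?R x) = a * \<bar>grad \<phi> x \<bullet> F x\<bar>" unfolding a_def using epos[of k] hc'_le[of "\<phi> x / e k"]
          by (simp add: abs_mult)
        also have "\<dots> \<le> a * \<theta>" using a g2 by (simp add: mult_left_mono)
        also have "\<dots> \<le> a * (\<theta> / c * (grad \<phi> x \<bullet> grad \<phi> x))"
        proof -
          have "\<theta> \<le> \<theta> / c * (grad \<phi> x \<bullet> grad \<phi> x)" using g1 c th by (simp add: field_simps)
          then show ?thesis using a by (rule mult_left_mono)
        qed
        also have "\<dots> = \<theta> / c * ?A x" unfolding a_def by (simp add: mult_ac)
        finally show ?thesis .
      qed
      have "\<bar>integral \<Omega> (fk k)\<bar> = norm (integral \<Omega> ?R)" using Rint(1)[of k] by simp
      also have "\<dots> \<le> integral \<Omega> (\<lambda>x. \<theta> / c * ?A x)"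
        by (rule integral_norm_bound_integral[OF Rint(2) integrable_on_mult_right[OF Abound(2)[OF epos]] pt])
      also have "\<dots> = \<theta> / c * integral \<Omega> ?A" by simp
      also have "\<dots> \<le> \<theta> / c * C" by (rule mult_left_mono[OF Abound(1)[OF epos[of k]]]) (use th c in simp)
      finally show ?thesis by simp
    qed
    then show ?thesis unfolding I_def
      by (intro LIMSEQ_le_const2[OF tendsto_rabs[OF dc(2)]]) blast
  qed
  have "I = 0"
  proof (rule ccontr)
    assume "I \<noteq> 0"
    have Cp: "C + 1 > 0" using Cnn by simp
    define \<theta> where "\<theta> = c * \<bar>I\<bar> / (2 * (C + 1))"
    have th: "\<theta> > 0" using \<open>I \<noteq> 0\<close> c Cp by (simp add: \<theta>_def)
    have t1: "\<theta> * (2 * (C + 1)) = c * \<bar>I\<bar>" unfolding \<theta>_def using Cp by simp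
    then have t2: "2 * (\<theta> * C) + 2 * \<theta> = c * \<bar>I\<bar>" by (simp add: algebra_simps)
    have "\<bar>I\<bar> \<le> \<theta> * C / c" by (rule Ibound[OF th])
    then have t3: "c * \<bar>I\<bar> \<le> \<theta> * C" using c by (simp add: pos_le_divide_eq mult.commute)
    have "\<theta> * C \<ge> 0" using th Cnn by simp
    then show False using t2 t3 th by linarith
  qed
  then show ?thesis using dc(1) I_def by (simp add: has_integral_integral)
qed

definition phi_ok :: "(real^'n::finite) set \<Rightarrow> (real^'n \<Rightarrow> real) \<Rightarrow> bool" where
  "phi_ok \<Omega> \<phi> \<longleftrightarrow> (\<forall>x. \<phi> differentiable (at x)) \<and> continuous_on UNIV (grad \<phi>) \<and>
     (\<forall>x i. pdiff i \<phi> differentiable (at x)) \<and> (\<forall>i. continuous_on UNIV (pdiff i (pdiff i \<phi>))) \<and>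
     (\<forall>x. \<phi> x = 0 \<longrightarrow> grad \<phi> x \<noteq> 0) \<and> \<Omega> = {x. \<phi> x < 0} \<and> bounded \<Omega>"

lemma phi_ok_open: "phi_ok \<Omega> \<phi> \<Longrightarrow> open \<Omega>"
proof -
  assume a: "phi_ok \<Omega> \<phi>"
  have phc: "continuous_on UNIV \<phi>"
    using a by (simp add: phi_ok_def differentiable_imp_continuous_within continuous_at_imp_continuous_on)
  then show ?thesis using a unfolding phi_ok_def by (simp add: open_Collect_less)
qed

lemma phi_ok_frontier: "phi_ok \<Omega> \<phi> \<Longrightarrow> x \<in> frontier \<Omega> \<Longrightarrow> \<phi> x = 0"
proof -
  assume a: "phi_ok \<Omega> \<phi>" "x \<in> frontier \<Omega>"
  have phc: "continuous_on UNIV \<phi>"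
    using a by (simp add: phi_ok_def differentiable_imp_continuous_within continuous_at_imp_continuous_on)
  have Om: "\<Omega> = {x. \<phi> x < 0}" using a phi_ok_def by blast
  have "closed {x. \<phi> x \<le> 0}" using phc by (simp add: closed_Collect_le)
  moreover have "\<Omega> \<subseteq> {x. \<phi> x \<le> 0}" using Om by auto
  ultimately have "closure \<Omega> \<subseteq> {x. \<phi> x \<le> 0}" using closure_minimal by blast
  then show ?thesis using a phi_ok_open[OF a(1)] Om by (force simp: frontier_def interior_open)
qed

lemma div_zero':
  fixes F G :: "real^'n::finite \<Rightarrow> real^'n"
  assumes ok: "phi_ok \<Omega> \<phi>"
    and Fd: "\<And>x. x \<in> \<Omega> \<Longrightarrow> F differentiable (at x)"
    and Fc: "\<And>i. continuous_on \<Omega> (pdiff i (\<lambda>y. F y $ i))"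
    and Dc: "continuous_on (closure \<Omega>) D" and DF: "\<And>x. x \<in> \<Omega> \<Longrightarrow> D x = divg F x"
    and Gc: "continuous_on (closure \<Omega>) G" and GF: "\<And>x. x \<in> \<Omega> \<Longrightarrow> G x = F x"
    and Gb: "\<And>x. x \<in> frontier \<Omega> \<Longrightarrow> G x \<bullet> grad \<phi> x = 0"
  shows "(divg F has_integral 0) \<Omega>"
  using ok unfolding phi_ok_def
  by (intro div_zero[of \<phi> \<Omega> F D G]) (use Fd Fc Dc DF Gc GF Gb in auto)

lemma bc_extract:
  fixes w :: "real^'n::finite \<Rightarrow> real" and G :: "real^'n \<Rightarrow> real^'n"
  assumes ok: "phi_ok \<Omega> \<phi>" and x: "x \<in> frontier \<Omega>"
    and Gc: "continuous_on (closure \<Omega>) G" and GF: "\<And>y. y \<in> \<Omega> \<Longrightarrow> G y = grad w y"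
    and bc: "Lim (at x within \<Omega>) (grad w) \<bullet> (grad \<phi> x /\<^sub>R norm (grad \<phi> x)) = 0"
  shows "G x \<bullet> grad \<phi> x = 0"
proof -
  have opO: "open \<Omega>" by (rule phi_ok_open[OF ok])
  have xc: "x \<in> closure \<Omega>" "x \<notin> \<Omega>" using x opO by (auto simp: frontier_def interior_open)
  have lp: "x islimpt \<Omega>" using xc by (auto simp: closure_def)
  have "(G \<longlongrightarrow> G x) (at x within closure \<Omega>)"
    using Gc xc(1) continuous_on_def by blast
  then have "(G \<longlongrightarrow> G x) (at x within \<Omega>)"
    by (rule tendsto_within_subset) (rule closure_subset)
  then have "(grad w \<longlongrightarrow> G x) (at x within \<Omega>)"
    by (rule tendsto_cong[THEN iffD1, rotated]) (auto simp: eventually_at_filter GF)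
  then have "Lim (at x within \<Omega>) (grad w) = G x"
    using lp by (intro tendsto_Lim) (auto simp: trivial_limit_within)
  moreover have "grad \<phi> x \<noteq> 0" using ok phi_ok_frontier[OF ok x] unfolding phi_ok_def by blast
  ultimately show ?thesis using bc by (simp add: inner_commute)
qed

lemma cont_slice:
  assumes "continuous_on A U" "\<And>x. x \<in> B \<Longrightarrow> (x, t) \<in> A"
  shows "continuous_on B (\<lambda>x. U (x, t))"
  by (rule continuous_on_compose2[OF assms(1)]) (auto intro!: continuous_intros assms(2))

lemma lap_zero:
  fixes w :: "real^'n::finite \<Rightarrow> real"
  assumes ok: "phi_ok \<Omega> \<phi>"
    and wd: "\<And>x i. x \<in> \<Omega> \<Longrightarrow> pdiff i w differentiable (at x)"
    and U1: "\<And>i. continuous_on (closure \<Omega>) (U1 i)" "\<And>i x. x \<in> \<Omega> \<Longrightarrow> U1 i x = pdiff i w x"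
    and U2: "\<And>i. continuous_on (closure \<Omega>) (U2 i)" "\<And>i x. x \<in> \<Omega> \<Longrightarrow> U2 i x = pdiff i (pdiff i w) x"
    and bc: "\<And>x. x \<in> frontier \<Omega> \<Longrightarrow> (\<chi> i. U1 i x) \<bullet> grad \<phi> x = 0"
  shows "(lap w has_integral 0) \<Omega>"
proof -
  have gd: "grad w differentiable (at x)" if "x \<in> \<Omega>" for x
    unfolding grad_def[abs_def] by (rule vec_lambda_diff) (use wd that in auto)
  have "(divg (grad w) has_integral 0) \<Omega>"
  proof (rule div_zero'[OF ok gd _ _ _ _ _ bc])
    show "continuous_on \<Omega> (pdiff i (\<lambda>y. grad w y $ i))" for i
    proof -
      have "continuous_on \<Omega> (U2 i)" using continuous_on_subset[OF U2(1)[of i] closure_subset] .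
      then have "continuous_on \<Omega> (pdiff i (pdiff i w))" by (rule continuous_on_eq) (use U2(2) in auto)
      then show ?thesis by (simp add: grad_nth)
    qed
    show "continuous_on (closure \<Omega>) (\<lambda>x. \<Sum>i\<in>UNIV. U2 i x)" using U2(1) by (intro continuous_intros)
    show "(\<Sum>i\<in>UNIV. U2 i x) = divg (grad w) x" if "x \<in> \<Omega>" for x
      using divg_eq[OF gd[OF that]] U2(2)[OF that] by (simp add: grad_nth)
    show "continuous_on (closure \<Omega>) (\<lambda>x. \<chi> i. U1 i x)" using U1(1) by (intro continuous_intros)
    show "(\<chi> i. U1 i x) = grad w x" if "x \<in> \<Omega>" for x
      using U1(2)[OF that] by (simp add: grad_def)
  qed auto
  then show ?thesis by (simp add: lap_def[abs_def])
qed

lemma const_int: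
  fixes S :: "(real^'n::finite) set"
  assumes "bounded S" "open S"
  shows "((\<lambda>x. c) has_integral c * measure lebesgue S) S" "measure lebesgue S \<ge> 0"
proof -
  have i: "(\<lambda>x. 1::real) integrable_on S" using int_closure[OF assms] by auto
  have m: "measure lebesgue S = integral S (\<lambda>x. 1::real)"
    by (rule lmeasure_integral[OF lmeasurable_open[OF assms]])
  show "((\<lambda>x. c) has_integral c * measure lebesgue S) S"
    using has_integral_mult_left[OF integrable_integral[OF i], of c] m by (simp add: mult.commute)
  show "measure lebesgue S \<ge> 0" by simp
qed

lemma slice_int:
  fixes f :: "real^'n::finite \<Rightarrow> real \<Rightarrow> real"
  assumes "bounded S" "open S" "continuous_on (closure S \<times> A) (\<lambda>(x,s). f x s)" "s \<in> A"
  shows "(\<lambda>x. f x s) integrable_on S"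
proof -
  have "continuous_on (closure S) (\<lambda>x. (\<lambda>(x,s). f x s) (x, s))"
    by (rule cont_slice[OF assms(3)]) (use assms(4) in auto)
  then show ?thesis using int_closure[OF assms(1,2)] by auto
qed

lemma int_cont_param:
  fixes f :: "real^'n::finite \<Rightarrow> real \<Rightarrow> real"
  assumes bdd: "bounded S" and op: "open S"
    and fc: "continuous_on (closure S \<times> {a..b}) (\<lambda>(x,s). f x s)"
  shows "continuous_on {a..b} (\<lambda>s. integral S (\<lambda>x. f x s))"
proof -
  define M where "M = measure lebesgue S"
  have M: "M \<ge> 0" "((\<lambda>x. c) has_integral c * M) S" for c using const_int[OF bdd op] M_def by auto
  have K: "compact (closure S \<times> {a..b})" using bdd by (intro compact_Times) (auto simp: compact_closure)
  have uc: "uniformly_continuous_on (closure S \<times> {a..b}) (\<lambda>(x,s). f x s)"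
    by (rule compact_uniformly_continuous[OF fc K])
  show ?thesis unfolding continuous_on_iff
  proof (intro ballI allI impI)
    fix s e :: real assume s: "s \<in> {a..b}" and e: "e > 0"
    define e' where "e' = e / (M + 1)"
    have e': "e' > 0" using e M by (simp add: e'_def)
    obtain d where d: "d > 0" "\<And>p q. p \<in> closure S \<times> {a..b} \<Longrightarrow> q \<in> closure S \<times> {a..b} \<Longrightarrow>
        dist q p < d \<Longrightarrow> dist ((\<lambda>(x,s). f x s) q) ((\<lambda>(x,s). f x s) p) < e'"
      using uc e' unfolding uniformly_continuous_on_def by metis
    show "\<exists>d>0. \<forall>s'\<in>{a..b}. dist s' s < d \<longrightarrow> dist (integral S (\<lambda>x. f x s')) (integral S (\<lambda>x. f x s)) < e"
    proof (intro exI[of _ d] conjI ballI impI)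
      fix s' assume s': "s' \<in> {a..b}" "dist s' s < d"
      have i1: "(\<lambda>x. f x s') integrable_on S" by (rule slice_int[OF bdd op fc s'(1)])
      have i2: "(\<lambda>x. f x s) integrable_on S" by (rule slice_int[OF bdd op fc s])
      have pt: "norm (f x s' - f x s) \<le> e'" if x: "x \<in> S" for x
      proof -
        have xc: "x \<in> closure S" using x closure_subset by blast
        have "dist (x, s') (x, s) < d" using s'(2) by (simp add: dist_Pair_Pair)
        then have "dist (f x s') (f x s) < e'" using d(2)[of "(x,s)" "(x,s')"] xc s s'(1) by auto
        then show ?thesis by (simp add: dist_norm)
      qed
      have "norm (integral S (\<lambda>x. f x s' - f x s)) \<le> integral S (\<lambda>x. e')"
        by (rule integral_norm_bound_integral[OF integrable_diff[OF i1 i2] _ pt]) (use M(2) in blast)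
      also have "\<dots> = e' * M" using M(2) by (simp add: integral_unique)
      also have "\<dots> < e" unfolding e'_def using M e by (simp add: field_simps)
      finally show "dist (integral S (\<lambda>x. f x s')) (integral S (\<lambda>x. f x s)) < e"
        by (simp add: dist_norm integral_diff[OF i1 i2])
    qed (use d in auto)
  qed
qed

lemma int_deriv:
  fixes f f' :: "real^'n::finite \<Rightarrow> real \<Rightarrow> real"
  assumes bdd: "bounded S" and op: "open S" and t0: "a < t0" "t0 < b"
    and fc: "continuous_on (closure S \<times> {a..b}) (\<lambda>(x,s). f x s)"
    and fd: "\<And>x s. x \<in> S \<Longrightarrow> a < s \<Longrightarrow> s < b \<Longrightarrow> (f x has_real_derivative f' x s) (at s)"
    and Pc: "continuous_on (closure S \<times> {a..b}) P"
    and PF: "\<And>x s. x \<in> S \<Longrightarrow> a < s \<Longrightarrow> s < b \<Longrightarrow> P (x, s) = f' x s"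
  shows "((\<lambda>s. integral S (\<lambda>x. f x s)) has_real_derivative integral S (\<lambda>x. f' x t0)) (at t0)"
proof -
  define M where "M = measure lebesgue S"
  have M: "M \<ge> 0" "((\<lambda>x. c) has_integral c * M) S" for c using const_int[OF bdd op] M_def by auto
  have K: "compact (closure S \<times> {a..b})" using bdd by (intro compact_Times) (auto simp: compact_closure)
  have uc: "uniformly_continuous_on (closure S \<times> {a..b}) P"
    by (rule compact_uniformly_continuous[OF Pc K])
  have t0ab: "t0 \<in> {a..b}" using t0 by auto
  have iP: "(\<lambda>x. f' x t0) integrable_on S"
  proof -
    have "(\<lambda>x. (\<lambda>x s. P (x, s)) x t0) integrable_on S"
      by (rule slice_int[OF bdd op _ t0ab]) (use Pc in \<open>simp add: case_prod_unfold\<close>)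
    then obtain I where I: "((\<lambda>x. P (x, t0)) has_integral I) S" unfolding integrable_on_def by auto
    have "((\<lambda>x. f' x t0) has_integral I) S"
      using has_integral_cong[of S "\<lambda>x. P (x, t0)" "\<lambda>x. f' x t0" I] I PF t0 by simp
    then show ?thesis by blast
  qed
  show ?thesis unfolding has_field_derivative_iff LIM_eq
  proof (intro allI impI)
    fix r :: real assume r: "r > 0"
    define e' where "e' = r / (M + 1)"
    have e': "e' > 0" using r M by (simp add: e'_def)
    obtain d where d: "d > 0" "\<And>p q. p \<in> closure S \<times> {a..b} \<Longrightarrow> q \<in> closure S \<times> {a..b} \<Longrightarrow>
        dist q p < d \<Longrightarrow> dist (P q) (P p) < e'"
      using uc e' unfolding uniformly_continuous_on_def by metis
    define \<delta> where "\<delta> = min d (min (t0 - a) (b - t0))"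
    have \<delta>: "\<delta> > 0" using d t0 by (simp add: \<delta>_def)
    show "\<exists>\<delta>>0. \<forall>s. s \<noteq> t0 \<and> norm (s - t0) < \<delta> \<longrightarrow>
      norm ((integral S (\<lambda>x. f x s) - integral S (\<lambda>x. f x t0)) / (s - t0) - integral S (\<lambda>x. f' x t0)) < r"
    proof (intro exI[of _ \<delta>] conjI allI impI)
      fix s assume s: "s \<noteq> t0 \<and> norm (s - t0) < \<delta>"
      have sab: "a < s" "s < b" using s \<delta>_def by auto
      have i1: "(\<lambda>x. f x s) integrable_on S" by (rule slice_int[OF bdd op fc]) (use sab in auto)
      have i2: "(\<lambda>x. f x t0) integrable_on S" by (rule slice_int[OF bdd op fc t0ab])
      have pt: "norm ((f x s - f x t0) / (s - t0) - f' x t0) \<le> e'" if x: "x \<in> S" for x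
      proof -
        obtain z where z: "min s t0 < z" "z < max s t0" "(f x s - f x t0) / (s - t0) = f' x z"
        proof (cases "s < t0")
          case True
          have "\<exists>z. s < z \<and> z < t0 \<and> f x t0 - f x s = (t0 - s) * f' x z"
            by (rule MVT2[OF True]) (use fd[OF x] sab t0 in auto)
          then obtain z where z: "s < z" "z < t0" "f x t0 - f x s = (t0 - s) * f' x z" by blast
          have "f x s - f x t0 = (s - t0) * f' x z" using z(3) by (simp add: algebra_simps)
          then have "(f x s - f x t0) / (s - t0) = f' x z" using True by simp
          then show ?thesis using that[of z] z True by simp
        next
          case False
          then have st: "t0 < s" using s by auto
          have "\<exists>z. t0 < z \<and> z < s \<and> f x s - f x t0 = (s - t0) * f' x z"
            by (rule MVT2[OF st]) (use fd[OF x] sab t0 in auto)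
          then obtain z where z: "t0 < z" "z < s" "f x s - f x t0 = (s - t0) * f' x z" by blast
          then have "(f x s - f x t0) / (s - t0) = f' x z" using st by simp
          then show ?thesis using that[of z] z st by simp
        qed
        have zab: "a < z" "z < b" using z sab t0 by auto
        have xc: "x \<in> closure S" using x closure_subset by blast
        have "\<bar>z - t0\<bar> < \<delta>" using z s by auto
        then have "dist (x, z) (x, t0) < d" using \<delta>_def by (simp add: dist_Pair_Pair dist_real_def)
        moreover have m1: "(x, t0) \<in> closure S \<times> {a..b}" using xc t0 by auto
        moreover have m2: "(x, z) \<in> closure S \<times> {a..b}" using xc zab by auto
        ultimately have "dist (P (x, z)) (P (x, t0)) < e'" using d(2)[OF m1 m2] by blast
        then show ?thesis using z(3) PF[OF x zab] PF[OF x t0] by (simp add: dist_norm)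
      qed
      have hi: "((\<lambda>x. (f x s - f x t0) / (s - t0) - f' x t0) has_integral
          ((integral S (\<lambda>x. f x s) - integral S (\<lambda>x. f x t0)) / (s - t0) - integral S (\<lambda>x. f' x t0))) S"
        by (intro has_integral_diff has_integral_divide integrable_integral i1 i2 iP)
      have "norm ((integral S (\<lambda>x. f x s) - integral S (\<lambda>x. f x t0)) / (s - t0) - integral S (\<lambda>x. f' x t0))
          \<le> integral S (\<lambda>x. e')"
      proof -
        have "norm (integral S (\<lambda>x. (f x s - f x t0) / (s - t0) - f' x t0)) \<le> integral S (\<lambda>x. e')"
          by (rule integral_norm_bound_integral[OF has_integral_integrable[OF hi] _ pt]) (use M(2) in blast)
        then show ?thesis by (simp only: integral_unique[OF hi])
      qed
      also have "\<dots> = e' * M" using M(2) by (simp add: integral_unique)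
      also have "\<dots> < r" unfolding e'_def using M r by (simp add: field_simps)
      finally show "norm ((integral S (\<lambda>x. f x s) - integral S (\<lambda>x. f x t0)) / (s - t0) - integral S (\<lambda>x. f' x t0)) < r" .
    qed (use \<delta> in auto)
  qed
qed


definition qf :: "real \<Rightarrow> real \<Rightarrow> real" where
  "qf \<alpha> s = s / (1 + s) powr \<alpha>"
definition qf' :: "real \<Rightarrow> real \<Rightarrow> real" where
  "qf' \<alpha> s = ((1 + s) powr \<alpha> - s * (\<alpha> * (1 + s) powr (\<alpha> - 1))) / ((1 + s) powr \<alpha>)\<^sup>2"

lemma qf_deriv: "s > -1 \<Longrightarrow> (qf \<alpha> has_real_derivative qf' \<alpha> s) (at s)"
  unfolding qf_def[abs_def] qf'_def
  by (auto intro!: derivative_eq_intros simp: power2_eq_square)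

lemma qf_cont: "continuous_on {0..} (qf \<alpha>)"
  unfolding qf_def[abs_def] by (auto intro!: continuous_intros)

lemma qf'_cont: "continuous_on {0..} (qf' \<alpha>)"
  unfolding qf'_def[abs_def] by (auto intro!: continuous_intros)

lemma flux_zero:
  fixes w1 w2 :: "real^'n::finite \<Rightarrow> real"
  assumes ok: "phi_ok \<Omega> \<phi>"
    and w1nn: "\<And>x. x \<in> closure \<Omega> \<Longrightarrow> w1 x \<ge> 0"
    and w1c: "continuous_on (closure \<Omega>) w1"
    and w1d: "\<And>x. x \<in> \<Omega> \<Longrightarrow> w1 differentiable (at x)"
    and U1: "\<And>i. continuous_on (closure \<Omega>) (U1 i)" "\<And>i x. x \<in> \<Omega> \<Longrightarrow> U1 i x = pdiff i w1 x"
    and w2d: "\<And>x i. x \<in> \<Omega> \<Longrightarrow> pdiff i w2 differentiable (at x)"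
    and V1: "\<And>i. continuous_on (closure \<Omega>) (V1 i)" "\<And>i x. x \<in> \<Omega> \<Longrightarrow> V1 i x = pdiff i w2 x"
    and V2: "\<And>i. continuous_on (closure \<Omega>) (V2 i)" "\<And>i x. x \<in> \<Omega> \<Longrightarrow> V2 i x = pdiff i (pdiff i w2) x"
    and bc: "\<And>x. x \<in> frontier \<Omega> \<Longrightarrow> (\<chi> i. V1 i x) \<bullet> grad \<phi> x = 0"
  shows "(divg (\<lambda>y. (w1 y / (1 + w1 y) powr \<alpha>) *\<^sub>R grad w2 y) has_integral 0) \<Omega>"
proof -
  define F where "F y = qf \<alpha> (w1 y) *\<^sub>R grad w2 y" for y
  have Feq: "(\<lambda>y. (w1 y / (1 + w1 y) powr \<alpha>) *\<^sub>R grad w2 y) = F"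
    by (simp add: F_def qf_def fun_eq_iff)
  have xcl: "x \<in> closure \<Omega>" if "x \<in> \<Omega>" for x using that closure_subset by blast
  have qw1c: "continuous_on (closure \<Omega>) (\<lambda>x. qf \<alpha> (w1 x))"
    by (rule continuous_on_compose2[OF qf_cont w1c]) (use w1nn in auto)
  have q'w1c: "continuous_on (closure \<Omega>) (\<lambda>x. qf' \<alpha> (w1 x))"
    by (rule continuous_on_compose2[OF qf'_cont w1c]) (use w1nn in auto)
  have dq: "((\<lambda>y. qf \<alpha> (w1 y)) has_derivative (\<lambda>h. qf' \<alpha> (w1 x) * frechet_derivative w1 (at x) h)) (at x)"
    if x: "x \<in> \<Omega>" for x
  proof -
    have D1: "(w1 has_derivative frechet_derivative w1 (at x)) (at x)"
      using w1d[OF x] frechet_derivative_works by blast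
    have "w1 x > -1" using w1nn[OF xcl[OF x]] by simp
    from has_derivative_compose[OF D1 qf_deriv[OF this, of \<alpha>, unfolded has_field_derivative_def]]
    show ?thesis by (simp add: o_def)
  qed
  have gd: "grad w2 differentiable (at x)" if "x \<in> \<Omega>" for x
    unfolding grad_def[abs_def] by (rule vec_lambda_diff) (use w2d that in auto)
  have Fd: "F differentiable (at x)" if x: "x \<in> \<Omega>" for x
    unfolding F_def[abs_def]
    by (rule differentiable_scaleR[OF _ gd[OF x]]) (use dq[OF x] differentiable_def in blast)
  define Q where "Q i x = qf' \<alpha> (w1 x) * U1 i x * V1 i x + qf \<alpha> (w1 x) * V2 i x" for i x
  have Qc: "continuous_on (closure \<Omega>) (Q i)" for i
    unfolding Q_def[abs_def] by (intro continuous_intros qw1c q'w1c U1(1) V1(1) V2(1))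
  have pdF: "pdiff i (\<lambda>y. F y $ i) x = Q i x" if x: "x \<in> \<Omega>" for i x
  proof -
    have D2: "(pdiff i w2 has_derivative frechet_derivative (pdiff i w2) (at x)) (at x)"
      using w2d[OF x] frechet_derivative_works by blast
    have hd: "((\<lambda>y. qf \<alpha> (w1 y) * pdiff i w2 y) has_derivative
        (\<lambda>h. qf \<alpha> (w1 x) * frechet_derivative (pdiff i w2) (at x) h + qf' \<alpha> (w1 x) * frechet_derivative w1 (at x) h * pdiff i w2 x)) (at x)"
      using has_derivative_mult[OF dq[OF x] D2] .
    have feq: "(\<lambda>y. F y $ i) = (\<lambda>y. qf \<alpha> (w1 y) * pdiff i w2 y)" by (simp add: F_def fun_eq_iff grad_nth)
    have "pdiff i (\<lambda>y. F y $ i) x = qf \<alpha> (w1 x) * frechet_derivative (pdiff i w2) (at x) (axis i 1)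
        + qf' \<alpha> (w1 x) * frechet_derivative w1 (at x) (axis i 1) * pdiff i w2 x"
      unfolding feq by (rule pdiff_eq[OF hd])
    then show ?thesis unfolding Q_def using U1(2)[OF x] V1(2)[OF x] V2(2)[OF x]
      by (simp add: pdiff_def algebra_simps)
  qed
  have "(divg F has_integral 0) \<Omega>"
  proof (rule div_zero'[OF ok Fd])
    show "continuous_on \<Omega> (pdiff i (\<lambda>y. F y $ i))" for i
      using continuous_on_subset[OF Qc closure_subset] pdF continuous_on_eq by metis
    show "continuous_on (closure \<Omega>) (\<lambda>x. \<Sum>i\<in>UNIV. Q i x)" using Qc by (intro continuous_intros)
    show "(\<Sum>i\<in>UNIV. Q i x) = divg F x" if "x \<in> \<Omega>" for x
      using divg_eq[OF Fd[OF that]] pdF[OF that] by simp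
    show "continuous_on (closure \<Omega>) (\<lambda>x. qf \<alpha> (w1 x) *\<^sub>R (\<chi> i. V1 i x))"
      using V1(1) qw1c by (intro continuous_intros)
    show "qf \<alpha> (w1 x) *\<^sub>R (\<chi> i. V1 i x) = F x" if "x \<in> \<Omega>" for x
      using V1(2)[OF that] by (simp add: F_def grad_def)
    show "qf \<alpha> (w1 x) *\<^sub>R (\<chi> i. V1 i x) \<bullet> grad \<phi> x = 0" if "x \<in> frontier \<Omega>" for x
      using bc[OF that] by simp
  qed auto
  then show ?thesis by (simp add: Feq)
qed

theorem corollary2p3:
  fixes \<Omega> :: "(real^'n::finite) set"
    and \<alpha> \<kappa> :: real and T :: ereal
    and u v w :: "real^'n \<Rightarrow> real \<Rightarrow> real"
  assumes dom: "bounded_smooth_domain \<Omega>"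
    and alpha: "\<alpha> \<ge> 0" and kappa: "\<kappa> \<ge> 0" and T: "T > 0"
    and u_nonneg: "\<forall>(x,t)\<in>cyl_closed0 \<Omega> T. u x t \<ge> 0"
    and v_nonneg: "\<forall>(x,t)\<in>cyl_closed0 \<Omega> T. v x t \<ge> 0"
    and u_C0: "continuous_on (cyl_closed0 \<Omega> T) (\<lambda>(x,t). u x t)"
    and v_C0: "continuous_on (cyl_closed0 \<Omega> T) (\<lambda>(x,t). v x t)"
    and u_C21: "C21 \<Omega> T u"
    and v_C21: "C21 \<Omega> T v"
    and u_eq: "\<forall>(x,t)\<in>cyl_open \<Omega> T.
        deriv (\<lambda>s. u x s) t =
          lap (\<lambda>y. u y t) x
          - divg (\<lambda>y. (u y t / (1 + u y t) powr \<alpha>) *\<^sub>R grad (\<lambda>z. v z t) y) x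
          - u x t * w x t + \<kappa> - u x t"
    and v_eq: "\<forall>(x,t)\<in>cyl_open \<Omega> T.
        deriv (\<lambda>s. v x s) t = lap (\<lambda>y. v y t) x + u x t * w x t - v x t"
    and u_bc: "\<forall>x\<in>frontier \<Omega>. \<forall>t. 0 < t \<and> ereal t < T \<longrightarrow> normal_deriv \<Omega> u x t = 0"
    and v_bc: "\<forall>x\<in>frontier \<Omega>. \<forall>t. 0 < t \<and> ereal t < T \<longrightarrow> normal_deriv \<Omega> v x t = 0"
    and w_bc: "\<forall>x\<in>frontier \<Omega>. \<forall>t. 0 < t \<and> ereal t < T \<longrightarrow> normal_deriv \<Omega> w x t = 0"
  shows "\<forall>t. 0 < t \<and> ereal t < T \<longrightarrow>
    integral \<Omega> (\<lambda>x. v x t)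
      \<le> exp (- t) * (integral \<Omega> (\<lambda>x. u x 0) + integral \<Omega> (\<lambda>x. v x 0))
        + \<kappa> * measure lebesgue \<Omega> * (1 - exp (- t))"
proof -
  obtain \<phi>0 where \<phi>0: "defining_function \<Omega> \<phi>0" using dom bounded_smooth_domain_def by blast
  define \<phi> where "\<phi> = (SOME \<phi>. defining_function \<Omega> \<phi>)"
  have df: "defining_function \<Omega> \<phi>" unfolding \<phi>_def by (rule someI[where P="\<lambda>\<phi>. defining_function \<Omega> \<phi>", OF \<phi>0])
  have Cinf: "C_infinity \<phi>" and Om: "\<Omega> = {x. \<phi> x < 0}" and gnz: "\<And>x. \<phi> x = 0 \<Longrightarrow> grad \<phi> x \<noteq> 0"
    using df unfolding defining_function_def by auto
  have pid: "pdiff_iter is \<phi> differentiable (at x)" and pic: "continuous_on UNIV (pdiff_iter is \<phi>)" for "is" x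
    using Cinf unfolding C_infinity_def by auto
  have bdd: "bounded \<Omega>" using dom bounded_smooth_domain_def by blast
  have ok: "phi_ok \<Omega> \<phi>" unfolding phi_ok_def
  proof (intro conjI allI impI)
    show "\<phi> differentiable (at x)" for x using pid[of "[]" x] by simp
    show "continuous_on UNIV (grad \<phi>)"
      unfolding grad_def[abs_def] using pic[of "[i]" for i] by (intro continuous_on_vec_lambda) simp
    show "pdiff i \<phi> differentiable (at x)" for x i using pid[of "[i]" x] by simp
    show "continuous_on UNIV (pdiff i (pdiff i \<phi>))" for i using pic[of "[i, i]"] by simp
  qed (use gnz Om bdd in auto)
  have opO: "open \<Omega>" by (rule phi_ok_open[OF ok])
  have nrm: "outward_normal \<Omega> x = grad \<phi> x /\<^sub>R norm (grad \<phi> x)" for x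
    unfolding outward_normal_def \<phi>_def Let_def by simp
  define M where "M = measure lebesgue \<Omega>"
  have Mint: "((\<lambda>x. c) has_integral c * M) \<Omega>" for c using const_int[OF bdd opO] M_def by auto
  note uc = u_C21[unfolded C21_def]
  note vc = v_C21[unfolded C21_def]
  have uC21: "\<forall>(x,t)\<in>cyl_open \<Omega> T. (\<lambda>y. u y t) differentiable (at x) \<and>
        (\<forall>i. pdiff i (\<lambda>y. u y t) differentiable (at x)) \<and> (\<lambda>s. u x s) differentiable (at t)"
    by (rule conjunct1[OF uc])
  have vC21: "\<forall>(x,t)\<in>cyl_open \<Omega> T. (\<lambda>y. v y t) differentiable (at x) \<and>
        (\<forall>i. pdiff i (\<lambda>y. v y t) differentiable (at x)) \<and> (\<lambda>s. v x s) differentiable (at t)"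
    by (rule conjunct1[OF vc])
  from choice[OF conjunct1[OF conjunct2[OF conjunct2[OF uc]]]]
  obtain uU1 where uU1: "\<forall>i. continuous_on (cyl_closed \<Omega> T) (uU1 i) \<and>
        (\<forall>(x,t)\<in>cyl_open \<Omega> T. uU1 i (x,t) = pdiff i (\<lambda>y. u y t) x)" ..
  from choice[OF conjunct1[OF conjunct2[OF conjunct2[OF vc]]]]
  obtain vU1 where vU1: "\<forall>i. continuous_on (cyl_closed \<Omega> T) (vU1 i) \<and>
        (\<forall>(x,t)\<in>cyl_open \<Omega> T. vU1 i (x,t) = pdiff i (\<lambda>y. v y t) x)" ..
  have uU2ex: "\<exists>U. continuous_on (cyl_closed \<Omega> T) U \<and>
        (\<forall>(x,t)\<in>cyl_open \<Omega> T. U (x,t) = pdiff i (pdiff i (\<lambda>y. u y t)) x)" for i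
    by (rule conjunct1[OF conjunct2[OF conjunct2[OF conjunct2[OF uc]]], rule_format, of i i])
  have vU2ex: "\<exists>U. continuous_on (cyl_closed \<Omega> T) U \<and>
        (\<forall>(x,t)\<in>cyl_open \<Omega> T. U (x,t) = pdiff i (pdiff i (\<lambda>y. v y t)) x)" for i
    by (rule conjunct1[OF conjunct2[OF conjunct2[OF conjunct2[OF vc]]], rule_format, of i i])
  from choice[OF allI[OF uU2ex]]
  obtain uU2 where uU2: "\<forall>i. continuous_on (cyl_closed \<Omega> T) (uU2 i) \<and>
        (\<forall>(x,t)\<in>cyl_open \<Omega> T. uU2 i (x,t) = pdiff i (pdiff i (\<lambda>y. u y t)) x)" ..
  from choice[OF allI[OF vU2ex]]
  obtain vU2 where vU2: "\<forall>i. continuous_on (cyl_closed \<Omega> T) (vU2 i) \<and>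
        (\<forall>(x,t)\<in>cyl_open \<Omega> T. vU2 i (x,t) = pdiff i (pdiff i (\<lambda>y. v y t)) x)" ..
  from conjunct2[OF conjunct2[OF conjunct2[OF conjunct2[OF uc]]]]
  obtain uUt where uUt: "continuous_on (cyl_closed \<Omega> T) uUt \<and>
    (\<forall>(x,t)\<in>cyl_open \<Omega> T. uUt (x,t) = deriv (\<lambda>s. u x s) t)" ..
  from conjunct2[OF conjunct2[OF conjunct2[OF conjunct2[OF vc]]]]
  obtain vUt where vUt: "continuous_on (cyl_closed \<Omega> T) vUt \<and>
    (\<forall>(x,t)\<in>cyl_open \<Omega> T. vUt (x,t) = deriv (\<lambda>s. v x s) t)" ..
  have inO: "(x, t) \<in> cyl_open \<Omega> T" if "x \<in> \<Omega>" "0 < t" "ereal t < T" for x t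
    using that by (simp add: cyl_open_def)
  have inC: "(x, t) \<in> cyl_closed \<Omega> T" if "x \<in> closure \<Omega>" "0 < t" "ereal t < T" for x t
    using that by (simp add: cyl_closed_def)
  have inC0: "(x, t) \<in> cyl_closed0 \<Omega> T" if "x \<in> closure \<Omega>" "0 \<le> t" "ereal t < T" for x t
    using that by (simp add: cyl_closed0_def)
  have xcl: "x \<in> closure \<Omega>" if "x \<in> \<Omega>" for x using that closure_subset by blast

  have spatial: "(lap (\<lambda>y. u y t) has_integral 0) \<Omega> \<and> (lap (\<lambda>y. v y t) has_integral 0) \<Omega> \<and>
      (divg (\<lambda>y. (u y t / (1 + u y t) powr \<alpha>) *\<^sub>R grad (\<lambda>z. v z t) y) has_integral 0) \<Omega>"
    if t: "0 < t" "ereal t < T" for t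
  proof -
    have uU1c: "continuous_on (closure \<Omega>) (\<lambda>x. uU1 i (x,t))" for i
      by (rule cont_slice[OF conjunct1[OF uU1[rule_format, of i]]]) (rule inC[OF _ t])
    have vU1c: "continuous_on (closure \<Omega>) (\<lambda>x. vU1 i (x,t))" for i
      by (rule cont_slice[OF conjunct1[OF vU1[rule_format, of i]]]) (rule inC[OF _ t])
    have uU2c: "continuous_on (closure \<Omega>) (\<lambda>x. uU2 i (x,t))" for i
      by (rule cont_slice[OF conjunct1[OF uU2[rule_format, of i]]]) (rule inC[OF _ t])
    have vU2c: "continuous_on (closure \<Omega>) (\<lambda>x. vU2 i (x,t))" for i
      by (rule cont_slice[OF conjunct1[OF vU2[rule_format, of i]]]) (rule inC[OF _ t])
    have uU1e: "uU1 i (x,t) = pdiff i (\<lambda>y. u y t) x" if "x \<in> \<Omega>" for i x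
      using bspec[OF conjunct2[OF uU1[rule_format, of i]] inO[OF that t]] by simp
    have vU1e: "vU1 i (x,t) = pdiff i (\<lambda>y. v y t) x" if "x \<in> \<Omega>" for i x
      using bspec[OF conjunct2[OF vU1[rule_format, of i]] inO[OF that t]] by simp
    have uU2e: "uU2 i (x,t) = pdiff i (pdiff i (\<lambda>y. u y t)) x" if "x \<in> \<Omega>" for i x
      using bspec[OF conjunct2[OF uU2[rule_format, of i]] inO[OF that t]] by simp
    have vU2e: "vU2 i (x,t) = pdiff i (pdiff i (\<lambda>y. v y t)) x" if "x \<in> \<Omega>" for i x
      using bspec[OF conjunct2[OF vU2[rule_format, of i]] inO[OF that t]] by simp
    have ud: "(\<lambda>y. u y t) differentiable (at x)" "pdiff i (\<lambda>y. u y t) differentiable (at x)"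
      if "x \<in> \<Omega>" for x i
      using bspec[OF uC21 inO[OF that t]] by simp_all
    have vd: "pdiff i (\<lambda>y. v y t) differentiable (at x)" if "x \<in> \<Omega>" for x i
      using bspec[OF vC21 inO[OF that t]] by simp
    have ubc: "(\<chi> i. uU1 i (x,t)) \<bullet> grad \<phi> x = 0" if x: "x \<in> frontier \<Omega>" for x
    proof (rule bc_extract[OF ok x])
      show "continuous_on (closure \<Omega>) (\<lambda>x. \<chi> i. uU1 i (x,t))" using uU1c by (intro continuous_on_vec_lambda)
      show "(\<chi> i. uU1 i (y,t)) = grad (\<lambda>y. u y t) y" if "y \<in> \<Omega>" for y
        using uU1e[OF that] by (simp add: grad_def)
      show "Lim (at x within \<Omega>) (grad (\<lambda>y. u y t)) \<bullet> (grad \<phi> x /\<^sub>R norm (grad \<phi> x)) = 0"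
        using u_bc x t unfolding normal_deriv_def nrm by blast
    qed
    have vbc: "(\<chi> i. vU1 i (x,t)) \<bullet> grad \<phi> x = 0" if x: "x \<in> frontier \<Omega>" for x
    proof (rule bc_extract[OF ok x])
      show "continuous_on (closure \<Omega>) (\<lambda>x. \<chi> i. vU1 i (x,t))" using vU1c by (intro continuous_on_vec_lambda)
      show "(\<chi> i. vU1 i (y,t)) = grad (\<lambda>y. v y t) y" if "y \<in> \<Omega>" for y
        using vU1e[OF that] by (simp add: grad_def)
      show "Lim (at x within \<Omega>) (grad (\<lambda>y. v y t)) \<bullet> (grad \<phi> x /\<^sub>R norm (grad \<phi> x)) = 0"
        using v_bc x t unfolding normal_deriv_def nrm by blast
    qed
    have lu: "(lap (\<lambda>y. u y t) has_integral 0) \<Omega>"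
      by (rule lap_zero[OF ok ud(2) uU1c uU1e uU2c uU2e ubc])
    have lv: "(lap (\<lambda>y. v y t) has_integral 0) \<Omega>"
      by (rule lap_zero[OF ok vd vU1c vU1e vU2c vU2e vbc])
    have unn: "u x t \<ge> 0" if "x \<in> closure \<Omega>" for x
      using bspec[OF u_nonneg inC0[OF that _ t(2)]] t by simp
    have uc0: "continuous_on (closure \<Omega>) (\<lambda>x. u x t)"
      using cont_slice[OF u_C0, of "closure \<Omega>" t] inC0 t by auto
    have fl: "(divg (\<lambda>y. (u y t / (1 + u y t) powr \<alpha>) *\<^sub>R grad (\<lambda>z. v z t) y) has_integral 0) \<Omega>"
      by (rule flux_zero[OF ok unn uc0 ud(1) uU1c uU1e vd vU1c vU1e vU2c vU2e vbc])
    show ?thesis using lu lv fl by blast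
  qed
  define Y where "Y s = integral \<Omega> (\<lambda>x. u x s + v x s)" for s
  have uvc: "continuous_on (closure \<Omega> \<times> {a..b}) (\<lambda>(x,s). u x s + v x s)" if "0 \<le> a" "ereal b < T" for a b
  proof -
    have sub: "closure \<Omega> \<times> {a..b} \<subseteq> cyl_closed0 \<Omega> T"
    proof
      fix p assume "p \<in> closure \<Omega> \<times> {a..b}"
      then obtain x s where p: "p = (x, s)" "x \<in> closure \<Omega>" "a \<le> s" "s \<le> b" by auto
      have "ereal s < T" using p(4) that(2) by (meson ereal_less_eq(3) order.strict_trans1)
      then show "p \<in> cyl_closed0 \<Omega> T" using p that(1) by (simp add: cyl_closed0_def)
    qed
    have "continuous_on (closure \<Omega> \<times> {a..b}) (\<lambda>p. (\<lambda>(x,t). u x t) p + (\<lambda>(x,t). v x t) p)"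
      by (intro continuous_on_add continuous_on_subset[OF u_C0 sub] continuous_on_subset[OF v_C0 sub])
    then show ?thesis by (simp add: case_prod_unfold)
  qed
  have Ycont: "continuous_on {0..t} Y" if "ereal t < T" for t
    unfolding Y_def[abs_def] by (rule int_cont_param[OF bdd opO uvc]) (use that in auto)
  have sliceY: "(\<lambda>x. u x s) integrable_on \<Omega>" "(\<lambda>x. v x s) integrable_on \<Omega>" "Y s = integral \<Omega> (\<lambda>x. u x s) + integral \<Omega> (\<lambda>x. v x s)"
    if "0 \<le> s" "ereal s < T" for s
  proof -
    have A: "s \<in> {s..s}" by simp
    have cu: "continuous_on (closure \<Omega> \<times> {s..s}) (\<lambda>(x,s). u x s)"
      by (rule continuous_on_subset[OF u_C0]) (use that in \<open>auto simp: cyl_closed0_def\<close>)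
    have cv: "continuous_on (closure \<Omega> \<times> {s..s}) (\<lambda>(x,s). v x s)"
      by (rule continuous_on_subset[OF v_C0]) (use that in \<open>auto simp: cyl_closed0_def\<close>)
    show iu: "(\<lambda>x. u x s) integrable_on \<Omega>" by (rule slice_int[OF bdd opO cu A])
    show iv: "(\<lambda>x. v x s) integrable_on \<Omega>" by (rule slice_int[OF bdd opO cv A])
    show "Y s = integral \<Omega> (\<lambda>x. u x s) + integral \<Omega> (\<lambda>x. v x s)"
      unfolding Y_def by (rule integral_add[OF iu iv])
  qed
  have Yderiv: "(Y has_real_derivative \<kappa> * M - Y t0) (at t0)" if t0: "0 < t0" "ereal t0 < T" for t0
  proof -
    obtain b where b: "ereal t0 < ereal b" "ereal b < T" using ereal_dense2[OF t0(2)] by blast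
    define a where "a = t0 / 2"
    have ab: "0 < a" "a < t0" "t0 < b" using t0 b by (auto simp: a_def)
    have sT: "ereal s < T" if "s < b" for s using that b(2) by (meson ereal_less_eq(3) less_imp_le order.strict_trans1)
    have subC: "closure \<Omega> \<times> {a..b} \<subseteq> cyl_closed \<Omega> T"
    proof
      fix p assume "p \<in> closure \<Omega> \<times> {a..b}"
      then obtain x s where p: "p = (x, s)" "x \<in> closure \<Omega>" "a \<le> s" "s \<le> b" by auto
      have "ereal s < T" using p(4) b(2) by (meson ereal_less_eq(3) order.strict_trans1)
      then show "p \<in> cyl_closed \<Omega> T" using p ab by (simp add: cyl_closed_def)
    qed
    have D: "((\<lambda>s. integral \<Omega> (\<lambda>x. u x s + v x s)) has_real_derivative
        integral \<Omega> (\<lambda>x. deriv (\<lambda>s. u x s) t0 + deriv (\<lambda>s. v x s) t0)) (at t0)"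
    proof (rule int_deriv[OF bdd opO ab(2,3) uvc[OF less_imp_le[OF ab(1)] b(2)]])
      show "((\<lambda>s. u x s + v x s) has_real_derivative deriv (\<lambda>s. u x s) s + deriv (\<lambda>s. v x s) s) (at s)"
        if "x \<in> \<Omega>" "a < s" "s < b" for x s
      proof -
        have o: "(x, s) \<in> cyl_open \<Omega> T" using inO[OF that(1)] that ab sT by auto
        have "(\<lambda>s. u x s) differentiable (at s)" "(\<lambda>s. v x s) differentiable (at s)"
          using bspec[OF uC21 o] bspec[OF vC21 o] by simp_all
        then show ?thesis
          by (intro DERIV_add) (simp_all add: DERIV_deriv_iff_real_differentiable)
      qed
      show "continuous_on (closure \<Omega> \<times> {a..b}) (\<lambda>p. uUt p + vUt p)"
        using uUt vUt subC by (intro continuous_on_add) (auto elim: continuous_on_subset)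
      show "uUt (x, s) + vUt (x, s) = deriv (\<lambda>s. u x s) s + deriv (\<lambda>s. v x s) s"
        if "x \<in> \<Omega>" "a < s" "s < b" for x s
      proof -
        have o: "(x, s) \<in> cyl_open \<Omega> T" using inO[OF that(1)] that ab sT by auto
        show ?thesis using bspec[OF conjunct2[OF uUt] o] bspec[OF conjunct2[OF vUt] o] by simp
      qed
    qed
    have sp: "(lap (\<lambda>y. u y t0) has_integral 0) \<Omega>" "(lap (\<lambda>y. v y t0) has_integral 0) \<Omega>"
      "(divg (\<lambda>y. (u y t0 / (1 + u y t0) powr \<alpha>) *\<^sub>R grad (\<lambda>z. v z t0) y) has_integral 0) \<Omega>"
      using spatial[OF t0] by blast+
    have iuv: "((\<lambda>x. u x t0 + v x t0) has_integral Y t0) \<Omega>"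
      unfolding Y_def using sliceY[OF less_imp_le[OF t0(1)] t0(2)]
      by (intro integrable_integral integrable_add) auto
    have hI: "((\<lambda>x. lap (\<lambda>y. u y t0) x + lap (\<lambda>y. v y t0) x
        - divg (\<lambda>y. (u y t0 / (1 + u y t0) powr \<alpha>) *\<^sub>R grad (\<lambda>z. v z t0) y) x + \<kappa> - (u x t0 + v x t0))
        has_integral (0 + 0 - 0 + \<kappa> * M - Y t0)) \<Omega>"
      by (intro has_integral_diff has_integral_add sp Mint iuv)
    have hI2: "((\<lambda>x. deriv (\<lambda>s. u x s) t0 + deriv (\<lambda>s. v x s) t0) has_integral (\<kappa> * M - Y t0)) \<Omega>"
    proof (rule has_integral_cong[THEN iffD1, OF _ hI[simplified]])
      fix x assume x: "x \<in> \<Omega>"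
      have o: "(x, t0) \<in> cyl_open \<Omega> T" by (rule inO[OF x t0])
      show "lap (\<lambda>y. u y t0) x + lap (\<lambda>y. v y t0) x
          - divg (\<lambda>y. (u y t0 / (1 + u y t0) powr \<alpha>) *\<^sub>R grad (\<lambda>z. v z t0) y) x + \<kappa> - (u x t0 + v x t0)
          = deriv (\<lambda>s. u x s) t0 + deriv (\<lambda>s. v x s) t0"
        using bspec[OF u_eq o] bspec[OF v_eq o] by simp
    qed
    show ?thesis using D integral_unique[OF hI2] unfolding Y_def[abs_def] by simp
  qed
  show ?thesis
  proof (intro allI impI)
    fix t assume t: "0 < t \<and> ereal t < T"
    define Z where "Z s = exp s * Y s - \<kappa> * M * exp s" for s
    have sT: "ereal s < T" if "s \<le> t" for s using that t by (meson ereal_less_eq(3) order.strict_trans1)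
    have Zc: "continuous_on {0..t} Z"
      unfolding Z_def[abs_def] using Ycont[of t] t by (intro continuous_intros) auto
    have Zd: "DERIV Z s :> 0" if "0 < s" "s < t" for s
    proof -
      have Yd: "(Y has_real_derivative \<kappa> * M - Y s) (at s)" by (rule Yderiv) (use that sT in auto)
      have "(Z has_real_derivative (exp s * Y s + exp s * (\<kappa> * M - Y s) - \<kappa> * M * exp s)) (at s)"
        unfolding Z_def[abs_def] by (auto intro!: derivative_eq_intros Yd simp: algebra_simps)
      moreover have "exp s * Y s + exp s * (\<kappa> * M - Y s) - \<kappa> * M * exp s = 0" by (simp add: algebra_simps)
      ultimately show ?thesis by simp
    qed
    have "Z t = Z 0" by (rule DERIV_isconst_end[OF _ Zc Zd]) (use t in auto)
    then have e1: "exp t * Y t - \<kappa> * M * exp t = Y 0 - \<kappa> * M" by (simp add: Z_def)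
    have e2: "Y t = exp (- t) * Y 0 + \<kappa> * M * (1 - exp (- t))"
    proof -
      have one: "exp (- t) * exp t = 1" by (simp add: exp_minus_inverse mult.commute)
      have "Y t = (exp (- t) * exp t) * Y t" using one by simp
      also have "\<dots> = exp (- t) * (exp t * Y t)" by (simp only: mult.assoc)
      also have "exp t * Y t = Y 0 - \<kappa> * M + \<kappa> * M * exp t" using e1 by simp
      also have "exp (- t) * (Y 0 - \<kappa> * M + \<kappa> * M * exp t) = exp (- t) * Y 0 + \<kappa> * M * (1 - exp (- t)) + \<kappa> * M * (exp (- t) * exp t - 1)"
        by (simp add: algebra_simps)
      also have "\<dots> = exp (- t) * Y 0 + \<kappa> * M * (1 - exp (- t))" using one by simp
      finally show ?thesis .
    qed
    have Y0: "Y 0 = integral \<Omega> (\<lambda>x. u x 0) + integral \<Omega> (\<lambda>x. v x 0)"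
      using sliceY(3)[of 0] T by (simp add: zero_ereal_def)
    have Yt: "Y t = integral \<Omega> (\<lambda>x. u x t) + integral \<Omega> (\<lambda>x. v x t)"
      using sliceY(3)[of t] t by simp
    have "integral \<Omega> (\<lambda>x. u x t) \<ge> 0"
    proof (rule integral_nonneg)
      show "(\<lambda>x. u x t) integrable_on \<Omega>" using sliceY(1)[of t] t by simp
      show "0 \<le> u x t" if "x \<in> \<Omega>" for x
        using bspec[OF u_nonneg inC0[OF xcl[OF that] _ conjunct2[OF t]]] t by simp
    qed
    then show "integral \<Omega> (\<lambda>x. v x t)
      \<le> exp (- t) * (integral \<Omega> (\<lambda>x. u x 0) + integral \<Omega> (\<lambda>x. v x 0))
        + \<kappa> * measure lebesgue \<Omega> * (1 - exp (- t))"
      using e2 Y0 Yt M_def by simp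
  qed
qed

end
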